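(* Let $0\to x_2\to x\to x_1\to0$ be a short exact sequence of finite-dimensional $\Pi$-modules. Suppose that $\operatorname{Ext}^1_\Pi(x_2,x_2)=0$ and $\operatorname{Ext}^1_\Pi(x,x_1)=0$. Then $\operatorname{Ext}^1_\Pi(x_1,x_1)=0$ and $\operatorname{Ext}^1_\Pi(x,x)=0$.
   Context: $K$ is an algebraically closed field, $Q=(I,\Omega)$ a finite quiver without loops, and $\Pi$ its preprojective algebra: the path algebra of the double quiver $\overline Q$ (arrows $\Omega\cup\{h^{op}:h\in\Omega\}$) modulo the ideal generated by $\sum_{h\in\Omega}(hh^{op}-h^{op}h)$. For finite-dimensional $\Pi$-modules one has functorial isomorphisms $\operatorname{Ext}^1_\Pi(N,M)\cong\operatorname{Ext}^1_\Pi(M,N)^*$. *)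

theory Defs
  imports "Jordan_Normal_Form.Matrix" "HOL-Computational_Algebra.Polynomial"
begin

text \<open>Finite-dimensional modules over the preprojective algebra Pi of a finite quiver
Q = (I, Omega), with I = UNIV :: 'i (finite), Omega = UNIV :: 'a (finite), and
arrow h going from src h to tgt h.  Arrows of the double quiver are pairs (h, True) = h
and (h, False) = h^op.\<close>

record ('i, 'a, 'k) pirep =
  dimv :: "'i \<Rightarrow> nat"
  mp :: "'a \<times> bool \<Rightarrow> 'k mat"

definition dsrc :: "('a \<Rightarrow> 'i) \<Rightarrow> ('a \<Rightarrow> 'i) \<Rightarrow> 'a \<times> bool \<Rightarrow> 'i" where
  "dsrc src tgt e = (if snd e then src (fst e) else tgt (fst e))"

definition dtgt :: "('a \<Rightarrow> 'i) \<Rightarrow> ('a \<Rightarrow> 'i) \<Rightarrow> 'a \<times> bool \<Rightarrow> 'i" where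
  "dtgt src tgt e = (if snd e then tgt (fst e) else src (fst e))"

text \<open>Representation of the double quiver annihilated by the preprojective relation
sum_h (h h^op - h^op h); its component at vertex i is required to vanish.\<close>
definition pi_module :: "('a \<Rightarrow> 'i) \<Rightarrow> ('a \<Rightarrow> 'i) \<Rightarrow> ('i, 'a, 'k::field) pirep \<Rightarrow> bool" where
  "pi_module src tgt M \<longleftrightarrow>
     (\<forall>e. mp M e \<in> carrier_mat (dimv M (dtgt src tgt e)) (dimv M (dsrc src tgt e))) \<and>
     (\<forall>i. \<forall>r < dimv M i. \<forall>c < dimv M i.
        (\<Sum>h\<in>{h. tgt h = i}. (mp M (h, True) * mp M (h, False)) $$ (r, c))
      - (\<Sum>h\<in>{h. src h = i}. (mp M (h, False) * mp M (h, True)) $$ (r, c)) = 0)"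

definition pi_hom :: "('a \<Rightarrow> 'i) \<Rightarrow> ('a \<Rightarrow> 'i) \<Rightarrow> ('i, 'a, 'k::field) pirep
    \<Rightarrow> ('i, 'a, 'k) pirep \<Rightarrow> ('i \<Rightarrow> 'k mat) \<Rightarrow> bool" where
  "pi_hom src tgt M N f \<longleftrightarrow>
     (\<forall>i. f i \<in> carrier_mat (dimv N i) (dimv M i)) \<and>
     (\<forall>e. f (dtgt src tgt e) * mp M e = mp N e * f (dsrc src tgt e))"

definition pi_ses :: "('a \<Rightarrow> 'i) \<Rightarrow> ('a \<Rightarrow> 'i) \<Rightarrow> ('i, 'a, 'k::field) pirep
    \<Rightarrow> ('i, 'a, 'k) pirep \<Rightarrow> ('i, 'a, 'k) pirep \<Rightarrow> ('i \<Rightarrow> 'k mat) \<Rightarrow> ('i \<Rightarrow> 'k mat) \<Rightarrow> bool" where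
  "pi_ses src tgt A B C f g \<longleftrightarrow>
     pi_module src tgt A \<and> pi_module src tgt B \<and> pi_module src tgt C \<and>
     pi_hom src tgt A B f \<and> pi_hom src tgt B C g \<and>
     (\<forall>i. \<forall>u \<in> carrier_vec (dimv A i). f i *\<^sub>v u = 0\<^sub>v (dimv B i) \<longrightarrow> u = 0\<^sub>v (dimv A i)) \<and>
     (\<forall>i. \<forall>v \<in> carrier_vec (dimv B i).
        (g i *\<^sub>v v = 0\<^sub>v (dimv C i)) \<longleftrightarrow> (\<exists>u \<in> carrier_vec (dimv A i). f i *\<^sub>v u = v)) \<and>
     (\<forall>i. \<forall>w \<in> carrier_vec (dimv C i). \<exists>v \<in> carrier_vec (dimv B i). g i *\<^sub>v v = w)"

text \<open>Ext^1(M, N) = 0: every extension 0 -> N -> E -> M -> 0 splits.\<close>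
definition ext1_zero :: "('a \<Rightarrow> 'i) \<Rightarrow> ('a \<Rightarrow> 'i) \<Rightarrow> ('i, 'a, 'k::field) pirep
    \<Rightarrow> ('i, 'a, 'k) pirep \<Rightarrow> bool" where
  "ext1_zero src tgt M N \<longleftrightarrow>
     (\<forall>E f g. pi_ses src tgt N E M f g \<longrightarrow>
        (\<exists>s. pi_hom src tgt M E s \<and> (\<forall>i. g i * s i = 1\<^sub>m (dimv M i))))"

end

theory Submission
  imports Defs "HOL-Library.Function_Algebras"
begin

definition msum :: "nat \<Rightarrow> nat \<Rightarrow> 'h set \<Rightarrow> ('h \<Rightarrow> 'k::field mat) \<Rightarrow> 'k mat" where
  "msum n m S F = mat n m (\<lambda>(r,c). \<Sum>h\<in>S. F h $$ (r,c))"

lemma msum_carrier[simp]: "msum n m S F \<in> carrier_mat n m"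
  and msum_dims[simp]: "dim_row (msum n m S F) = n" "dim_col (msum n m S F) = m"
  by (auto simp: msum_def)

lemma index_msum[simp]: "r < n \<Longrightarrow> c < m \<Longrightarrow> msum n m S F $$ (r,c) = (\<Sum>h\<in>S. F h $$ (r,c))"
  by (simp add: msum_def)

lemma idx_mult: "A \<in> carrier_mat n k \<Longrightarrow> B \<in> carrier_mat k m \<Longrightarrow> r < n \<Longrightarrow> c < m \<Longrightarrow>
  (A * B) $$ (r,c) = (\<Sum>j<k. A $$ (r,j) * B $$ (j,c))"
  by (simp add: scalar_prod_def atLeast0LessThan row_def col_def)

lemma msum_mult_left:
  assumes "A \<in> carrier_mat p n" "\<And>h. h \<in> S \<Longrightarrow> F h \<in> carrier_mat n m"
  shows "A * msum n m S F = msum p m S (\<lambda>h. A * F h)"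
proof (rule eq_matI)
  fix r c assume rc: "r < dim_row (msum p m S (\<lambda>h. A * F h))" "c < dim_col (msum p m S (\<lambda>h. A * F h))"
  have "(A * msum n m S F) $$ (r,c) = (\<Sum>k<n. A $$ (r,k) * (\<Sum>h\<in>S. F h $$ (k,c)))"
    using assms rc by (simp add: scalar_prod_def atLeast0LessThan row_def col_def)
  also have "\<dots> = (\<Sum>h\<in>S. \<Sum>k<n. A $$ (r,k) * F h $$ (k,c))"
    by (simp add: sum_distrib_left sum.swap[of _ S])
  also have "\<dots> = msum p m S (\<lambda>h. A * F h) $$ (r,c)"
    using rc by (auto intro!: sum.cong simp: idx_mult[OF assms(1) assms(2)])
  finally show "(A * msum n m S F) $$ (r,c) = msum p m S (\<lambda>h. A * F h) $$ (r,c)" .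
qed (use assms in auto)

lemma msum_mult_right:
  assumes "A \<in> carrier_mat m p" "\<And>h. h \<in> S \<Longrightarrow> F h \<in> carrier_mat n m"
  shows "msum n m S F * A = msum n p S (\<lambda>h. F h * A)"
proof (rule eq_matI)
  fix r c assume rc: "r < dim_row (msum n p S (\<lambda>h. F h * A))" "c < dim_col (msum n p S (\<lambda>h. F h * A))"
  have "(msum n m S F * A) $$ (r,c) = (\<Sum>k<m. (\<Sum>h\<in>S. F h $$ (r,k)) * A $$ (k,c))"
    using assms rc by (simp add: scalar_prod_def atLeast0LessThan row_def col_def)
  also have "\<dots> = (\<Sum>h\<in>S. \<Sum>k<m. F h $$ (r,k) * A $$ (k,c))"
    by (simp add: sum_distrib_right sum.swap[of _ S])
  also have "\<dots> = msum n p S (\<lambda>h. F h * A) $$ (r,c)"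
    using rc by (auto intro!: sum.cong simp: idx_mult[OF assms(2) assms(1)])
  finally show "(msum n m S F * A) $$ (r,c) = msum n p S (\<lambda>h. F h * A) $$ (r,c)" .
qed (use assms in auto)

lemma msum_add:
  assumes "\<And>h. h \<in> S \<Longrightarrow> F h \<in> carrier_mat n m" "\<And>h. h \<in> S \<Longrightarrow> G h \<in> carrier_mat n m"
  shows "msum n m S (\<lambda>h. F h + G h) = msum n m S F + msum n m S G"
  by (rule eq_matI) (auto simp: sum.distrib[symmetric] intro!: sum.cong dest!: assms)

lemma msum_minus:
  assumes "\<And>h. h \<in> S \<Longrightarrow> F h \<in> carrier_mat n m" "\<And>h. h \<in> S \<Longrightarrow> G h \<in> carrier_mat n m"
  shows "msum n m S (\<lambda>h. F h - G h) = msum n m S F - msum n m S G"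
  by (rule eq_matI) (auto simp: sum_subtractf[symmetric] intro!: sum.cong dest!: assms)

lemma msum_cong:
  assumes "\<And>h. h \<in> S \<Longrightarrow> F h = G h"
  shows "msum n m S F = msum n m S G"
  using assms by (simp add: msum_def)

locale Q =
  fixes src tgt :: "'a::finite \<Rightarrow> 'i::finite"
begin

abbreviation "ds \<equiv> dsrc src tgt"
abbreviation "dt \<equiv> dtgt src tgt"

lemma ds_dt_simps[simp]: "ds (h,True) = src h" "dt (h,True) = tgt h"
  "ds (h,False) = tgt h" "dt (h,False) = src h"
  by (auto simp: dsrc_def dtgt_def)

definition rep :: "('i,'a,'k::field) pirep \<Rightarrow> bool" where
  "rep M \<longleftrightarrow> (\<forall>e. mp M e \<in> carrier_mat (dimv M (dt e)) (dimv M (ds e)))"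

lemma repD[simp]: "rep M \<Longrightarrow> mp M (h,True) \<in> carrier_mat (dimv M (tgt h)) (dimv M (src h))"
  "rep M \<Longrightarrow> mp M (h,False) \<in> carrier_mat (dimv M (src h)) (dimv M (tgt h))"
  "rep M \<Longrightarrow> mp M e \<in> carrier_mat (dimv M (dt e)) (dimv M (ds e))"
  unfolding rep_def by (metis ds_dt_simps)+

definition relm :: "('i,'a,'k::field) pirep \<Rightarrow> 'i \<Rightarrow> 'k mat" where
  "relm M i = msum (dimv M i) (dimv M i) {h. tgt h = i} (\<lambda>h. mp M (h,True) * mp M (h,False))
     - msum (dimv M i) (dimv M i) {h. src h = i} (\<lambda>h. mp M (h,False) * mp M (h,True))"

lemma pi_module_iff: "pi_module src tgt M \<longleftrightarrow> rep M \<and> (\<forall>i. relm M i = 0\<^sub>m (dimv M i) (dimv M i))"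
proof -
  have "relm M i = 0\<^sub>m (dimv M i) (dimv M i) \<longleftrightarrow> (\<forall>r < dimv M i. \<forall>c < dimv M i.
        (\<Sum>h\<in>{h. tgt h = i}. (mp M (h, True) * mp M (h, False)) $$ (r, c))
      - (\<Sum>h\<in>{h. src h = i}. (mp M (h, False) * mp M (h, True)) $$ (r, c)) = 0)" for i
    unfolding relm_def by (auto simp: mat_eq_iff) 
  then show ?thesis unfolding pi_module_def rep_def by auto
qed


definition C0 :: "('i,'a,'k::field) pirep \<Rightarrow> ('i,'a,'k) pirep \<Rightarrow> ('i \<Rightarrow> 'k mat) \<Rightarrow> bool" where
  "C0 M N \<sigma> \<longleftrightarrow> (\<forall>i. \<sigma> i \<in> carrier_mat (dimv N i) (dimv M i))"

definition C1 :: "('i,'a,'k::field) pirep \<Rightarrow> ('i,'a,'k) pirep \<Rightarrow> ('a \<times> bool \<Rightarrow> 'k mat) \<Rightarrow> bool" where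
  "C1 M N \<phi> \<longleftrightarrow> (\<forall>e. \<phi> e \<in> carrier_mat (dimv N (dt e)) (dimv M (ds e)))"

definition d0 :: "('i,'a,'k::field) pirep \<Rightarrow> ('i,'a,'k) pirep \<Rightarrow> ('i \<Rightarrow> 'k mat) \<Rightarrow> 'a \<times> bool \<Rightarrow> 'k mat" where
  "d0 M N \<sigma> e = \<sigma> (dt e) * mp M e - mp N e * \<sigma> (ds e)"

definition d1 :: "('i,'a,'k::field) pirep \<Rightarrow> ('i,'a,'k) pirep \<Rightarrow> ('a \<times> bool \<Rightarrow> 'k mat) \<Rightarrow> 'i \<Rightarrow> 'k mat" where
  "d1 M N \<phi> i = msum (dimv N i) (dimv M i) {h. tgt h = i} (\<lambda>h. mp N (h,True) * \<phi> (h,False) + \<phi> (h,True) * mp M (h,False))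
     - msum (dimv N i) (dimv M i) {h. src h = i} (\<lambda>h. mp N (h,False) * \<phi> (h,True) + \<phi> (h,False) * mp M (h,True))"

definition Zc :: "('i,'a,'k::field) pirep \<Rightarrow> ('i,'a,'k) pirep \<Rightarrow> ('a \<times> bool \<Rightarrow> 'k mat) \<Rightarrow> bool" where
  "Zc M N \<phi> \<longleftrightarrow> C1 M N \<phi> \<and> (\<forall>i. d1 M N \<phi> i = 0\<^sub>m (dimv N i) (dimv M i))"

definition H1z :: "('i,'a,'k::field) pirep \<Rightarrow> ('i,'a,'k) pirep \<Rightarrow> bool" where
  "H1z M N \<longleftrightarrow> (\<forall>\<phi>. Zc M N \<phi> \<longrightarrow> (\<exists>\<sigma>. C0 M N \<sigma> \<and> d0 M N \<sigma> = \<phi>))"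

lemma C0D: "C0 M N \<sigma> \<Longrightarrow> \<sigma> i \<in> carrier_mat (dimv N i) (dimv M i)"
  by (simp add: C0_def)

lemma C1D: "C1 M N \<phi> \<Longrightarrow> \<phi> e \<in> carrier_mat (dimv N (dt e)) (dimv M (ds e))"
  "C1 M N \<phi> \<Longrightarrow> \<phi> (h,True) \<in> carrier_mat (dimv N (tgt h)) (dimv M (src h))"
  "C1 M N \<phi> \<Longrightarrow> \<phi> (h,False) \<in> carrier_mat (dimv N (src h)) (dimv M (tgt h))"
  unfolding C1_def by (metis ds_dt_simps)+

lemma d0_C1: "rep M \<Longrightarrow> rep N \<Longrightarrow> C0 M N \<sigma> \<Longrightarrow> C1 M N (d0 M N \<sigma>)"
  unfolding C1_def d0_def using C0D repD(3) by (metis minus_carrier_mat mult_carrier_mat)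

lemma d1_carrier: "d1 M N \<phi> i \<in> carrier_mat (dimv N i) (dimv M i)"
  unfolding d1_def by (rule minus_carrier_mat) simp

lemma mat_minus_eq0: "(A :: 'k::field mat) \<in> carrier_mat n m \<Longrightarrow> B \<in> carrier_mat n m \<Longrightarrow> (A - B = 0\<^sub>m n m) = (A = B)"
  by (auto simp: mat_eq_iff)

lemma d0_eq0_iff: "rep M \<Longrightarrow> rep N \<Longrightarrow> C0 M N u \<Longrightarrow>
  (d0 M N u e = 0\<^sub>m (dimv N (dt e)) (dimv M (ds e))) = (u (dt e) * mp M e = mp N e * u (ds e))"
  unfolding d0_def
  by (rule mat_minus_eq0) (auto intro: mult_carrier_mat[OF C0D repD(3)] mult_carrier_mat[OF repD(3) C0D])

lemma hom_iff: "rep M \<Longrightarrow> rep N \<Longrightarrow> pi_hom src tgt M N u \<longleftrightarrow>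
   C0 M N u \<and> (\<forall>e. d0 M N u e = 0\<^sub>m (dimv N (dt e)) (dimv M (ds e)))"
  using d0_eq0_iff unfolding pi_hom_def C0_def by blast

lemma homD: "pi_hom src tgt M N u \<Longrightarrow> C0 M N u"
  "pi_hom src tgt M N u \<Longrightarrow> u (dt e) * mp M e = mp N e * u (ds e)"
  "pi_hom src tgt M N u \<Longrightarrow> u (tgt h) * mp M (h,True) = mp N (h,True) * u (src h)"
  "pi_hom src tgt M N u \<Longrightarrow> u (src h) * mp M (h,False) = mp N (h,False) * u (tgt h)"
  unfolding pi_hom_def C0_def by (metis ds_dt_simps)+

end

lemma madd1: fixes a :: "'k::field mat"
  shows "a \<in> carrier_mat n m \<Longrightarrow> b \<in> carrier_mat n m \<Longrightarrow> c \<in> carrier_mat n m \<Longrightarrow> d \<in> carrier_mat n m \<Longrightarrow>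
  (a - b) - (c - d) = (a - c) - (b - d)"
  by (intro eq_matI) auto

lemma madd2: fixes a :: "'k::field mat"
  shows "a \<in> carrier_mat n m \<Longrightarrow> b \<in> carrier_mat n m \<Longrightarrow> c \<in> carrier_mat n m \<Longrightarrow> d \<in> carrier_mat n m \<Longrightarrow>
  (a + b) - (c + d) = (a - c) + (b - d)"
  by (intro eq_matI) auto

lemma madd3: fixes a :: "'k::field mat"
  shows "a \<in> carrier_mat n m \<Longrightarrow> b \<in> carrier_mat n m \<Longrightarrow> c \<in> carrier_mat n m \<Longrightarrow>
  (a - b) + (c - a) = c - b"
  by (intro eq_matI) auto

lemma aux_minus: fixes Nm :: "'k::field mat"
  assumes Nm: "Nm \<in> carrier_mat n n2" and P1: "P1 \<in> carrier_mat n2 m" and Q1: "Q1 \<in> carrier_mat n2 m"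
    and P2: "P2 \<in> carrier_mat n m3" and Q2: "Q2 \<in> carrier_mat n m3" and Mm: "Mm \<in> carrier_mat m3 m"
  shows "Nm * (P1 - Q1) + (P2 - Q2) * Mm = (Nm * P1 + P2 * Mm) - (Nm * Q1 + Q2 * Mm)"
proof -
  have "Nm * (P1 - Q1) + (P2 - Q2) * Mm = (Nm * P1 - Nm * Q1) + (P2 * Mm - Q2 * Mm)"
    by (simp add: mult_minus_distrib_mat[OF Nm P1 Q1] minus_mult_distrib_mat[OF P2 Q2 Mm])
  also have "\<dots> = (Nm * P1 + P2 * Mm) - (Nm * Q1 + Q2 * Mm)"
    by (rule madd2[symmetric]) (auto intro: mult_carrier_mat[OF Nm P1] mult_carrier_mat[OF Nm Q1]
      mult_carrier_mat[OF P2 Mm] mult_carrier_mat[OF Q2 Mm])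
  finally show ?thesis .
qed

lemma aux_d0: fixes N1 :: "'k::field mat"
  assumes N1: "N1 \<in> carrier_mat n n2" and N2: "N2 \<in> carrier_mat n2 n" and M1: "M1 \<in> carrier_mat m m2"
    and M2: "M2 \<in> carrier_mat m2 m" and Si: "Si \<in> carrier_mat n m" and Sj: "Sj \<in> carrier_mat n2 m2"
  shows "N1 * (Sj * M2 - N2 * Si) + (Si * M1 - N1 * Sj) * M2 = Si * (M1 * M2) - (N1 * N2) * Si"
proof -
  have "N1 * (Sj * M2 - N2 * Si) + (Si * M1 - N1 * Sj) * M2 =
     ((N1 * Sj) * M2 - (N1 * N2) * Si) + (Si * (M1 * M2) - (N1 * Sj) * M2)"
    by (simp add: mult_minus_distrib_mat[OF N1 mult_carrier_mat[OF Sj M2] mult_carrier_mat[OF N2 Si]]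
      minus_mult_distrib_mat[OF mult_carrier_mat[OF Si M1] mult_carrier_mat[OF N1 Sj] M2]
      assoc_mult_mat[OF N1 Sj M2] assoc_mult_mat[OF N1 N2 Si] assoc_mult_mat[OF Si M1 M2])
  also have "\<dots> = Si * (M1 * M2) - (N1 * N2) * Si"
    by (rule madd3) (auto intro: mult_carrier_mat[OF mult_carrier_mat[OF N1 Sj] M2]
      mult_carrier_mat[OF mult_carrier_mat[OF N1 N2] Si] mult_carrier_mat[OF Si mult_carrier_mat[OF M1 M2]])
  finally show ?thesis .
qed

context Q begin
lemma d0_minus: assumes "rep M" "rep N" "C0 M N \<sigma>" "C0 M N \<tau>"
  shows "d0 M N (\<lambda>i. \<sigma> i - \<tau> i) e = d0 M N \<sigma> e - d0 M N \<tau> e"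
proof -
  note c = repD(3)[OF assms(1), of e] repD(3)[OF assms(2), of e] C0D[OF assms(3)] C0D[OF assms(4)]
  have 1: "(\<sigma> (dt e) - \<tau> (dt e)) * mp M e = \<sigma> (dt e) * mp M e - \<tau> (dt e) * mp M e"
    by (rule minus_mult_distrib_mat[OF c(3) c(4) c(1)])
  have 2: "mp N e * (\<sigma> (ds e) - \<tau> (ds e)) = mp N e * \<sigma> (ds e) - mp N e * \<tau> (ds e)"
    by (rule mult_minus_distrib_mat[OF c(2) c(3) c(4)])
  show ?thesis unfolding d0_def 1 2
    by (rule madd1) (auto intro: mult_carrier_mat[OF c(3) c(1)] mult_carrier_mat[OF c(4) c(1)]
        mult_carrier_mat[OF c(2) c(3)] mult_carrier_mat[OF c(2) c(4)])
qed

lemma d0_add: assumes "rep M" "rep N" "C0 M N \<sigma>" "C0 M N \<tau>"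
  shows "d0 M N (\<lambda>i. \<sigma> i + \<tau> i) e = d0 M N \<sigma> e + d0 M N \<tau> e"
proof -
  note c = repD(3)[OF assms(1), of e] repD(3)[OF assms(2), of e] C0D[OF assms(3)] C0D[OF assms(4)]
  have 1: "(\<sigma> (dt e) + \<tau> (dt e)) * mp M e = \<sigma> (dt e) * mp M e + \<tau> (dt e) * mp M e"
    by (rule add_mult_distrib_mat[OF c(3) c(4) c(1)])
  have 2: "mp N e * (\<sigma> (ds e) + \<tau> (ds e)) = mp N e * \<sigma> (ds e) + mp N e * \<tau> (ds e)"
    by (rule mult_add_distrib_mat[OF c(2) c(3) c(4)])
  show ?thesis unfolding d0_def 1 2
    by (rule madd2) (auto intro: mult_carrier_mat[OF c(3) c(1)] mult_carrier_mat[OF c(4) c(1)]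
        mult_carrier_mat[OF c(2) c(3)] mult_carrier_mat[OF c(2) c(4)])
qed

lemma d0_comp_left: assumes "rep M" "rep N" "rep N'" "C0 M N \<sigma>" "pi_hom src tgt N N' u"
  shows "d0 M N' (\<lambda>i. u i * \<sigma> i) e = u (dt e) * d0 M N \<sigma> e"
proof -
  note Me = repD(3)[OF assms(1), of e] and Ne = repD(3)[OF assms(2), of e]
    and N'e = repD(3)[OF assms(3), of e] and s = C0D[OF assms(4)] and uc = C0D[OF homD(1)[OF assms(5)]]
  have "u (dt e) * d0 M N \<sigma> e = u (dt e) * (\<sigma> (dt e) * mp M e) - u (dt e) * (mp N e * \<sigma> (ds e))"
    unfolding d0_def by (rule mult_minus_distrib_mat[OF uc mult_carrier_mat[OF s Me] mult_carrier_mat[OF Ne s]])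
  also have "\<dots> = (u (dt e) * \<sigma> (dt e)) * mp M e - (u (dt e) * mp N e) * \<sigma> (ds e)"
    by (simp add: assoc_mult_mat[OF uc s Me] assoc_mult_mat[OF uc Ne s])
  also have "\<dots> = (u (dt e) * \<sigma> (dt e)) * mp M e - (mp N' e * u (ds e)) * \<sigma> (ds e)"
    using homD(2)[OF assms(5)] by simp
  also have "\<dots> = d0 M N' (\<lambda>i. u i * \<sigma> i) e"
    unfolding d0_def by (simp add: assoc_mult_mat[OF N'e uc s])
  finally show ?thesis by simp
qed

lemma d0_comp_right: assumes "rep M" "rep N" "rep M'" "C0 M N \<sigma>" "pi_hom src tgt M' M v"
  shows "d0 M' N (\<lambda>i. \<sigma> i * v i) e = d0 M N \<sigma> e * v (ds e)"
proof -
  note Me = repD(3)[OF assms(1), of e] and Ne = repD(3)[OF assms(2), of e]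
    and M'e = repD(3)[OF assms(3), of e] and s = C0D[OF assms(4)] and vc = C0D[OF homD(1)[OF assms(5)]]
  have "d0 M N \<sigma> e * v (ds e) = (\<sigma> (dt e) * mp M e) * v (ds e) - (mp N e * \<sigma> (ds e)) * v (ds e)"
    unfolding d0_def by (rule minus_mult_distrib_mat[OF mult_carrier_mat[OF s Me] mult_carrier_mat[OF Ne s] vc])
  also have "\<dots> = \<sigma> (dt e) * (mp M e * v (ds e)) - mp N e * (\<sigma> (ds e) * v (ds e))"
    by (simp add: assoc_mult_mat[OF s Me vc] assoc_mult_mat[OF Ne s vc])
  also have "\<dots> = \<sigma> (dt e) * (v (dt e) * mp M' e) - mp N e * (\<sigma> (ds e) * v (ds e))"
    using homD(2)[OF assms(5)] by simp
  also have "\<dots> = d0 M' N (\<lambda>i. \<sigma> i * v i) e"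
    unfolding d0_def by (simp add: assoc_mult_mat[OF s vc M'e])
  finally show ?thesis by simp
qed

lemma aux_left:
  fixes U :: "'k::field mat"
  assumes U: "U \<in> carrier_mat p n" and Nm: "Nm \<in> carrier_mat n n2" and P1: "P1 \<in> carrier_mat n2 m"
    and P2: "P2 \<in> carrier_mat n m3" and Mm: "Mm \<in> carrier_mat m3 m"
    and Nm': "Nm' \<in> carrier_mat p p2" and U2: "U2 \<in> carrier_mat p2 n2" and h: "U * Nm = Nm' * U2"
  shows "U * (Nm * P1 + P2 * Mm) = Nm' * (U2 * P1) + (U * P2) * Mm"
proof -
  have "U * (Nm * P1 + P2 * Mm) = U * (Nm * P1) + U * (P2 * Mm)"
    by (rule mult_add_distrib_mat[OF U mult_carrier_mat[OF Nm P1] mult_carrier_mat[OF P2 Mm]])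
  also have "\<dots> = (U * Nm) * P1 + (U * P2) * Mm"
    by (simp add: assoc_mult_mat[OF U Nm P1] assoc_mult_mat[OF U P2 Mm])
  also have "\<dots> = Nm' * (U2 * P1) + (U * P2) * Mm"
    by (simp add: h assoc_mult_mat[OF Nm' U2 P1])
  finally show ?thesis .
qed

lemma aux_right:
  fixes V :: "'k::field mat"
  assumes V: "V \<in> carrier_mat m p" and Nm: "Nm \<in> carrier_mat n n2" and P1: "P1 \<in> carrier_mat n2 m"
    and P2: "P2 \<in> carrier_mat n m3" and Mm: "Mm \<in> carrier_mat m3 m"
    and Mm': "Mm' \<in> carrier_mat p3 p" and V2: "V2 \<in> carrier_mat m3 p3" and h: "Mm * V = V2 * Mm'"
  shows "(Nm * P1 + P2 * Mm) * V = Nm * (P1 * V) + (P2 * V2) * Mm'"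
proof -
  have "(Nm * P1 + P2 * Mm) * V = (Nm * P1) * V + (P2 * Mm) * V"
    by (rule add_mult_distrib_mat[OF mult_carrier_mat[OF Nm P1] mult_carrier_mat[OF P2 Mm] V])
  also have "\<dots> = Nm * (P1 * V) + P2 * (Mm * V)"
    by (simp add: assoc_mult_mat[OF Nm P1 V] assoc_mult_mat[OF P2 Mm V])
  also have "\<dots> = Nm * (P1 * V) + (P2 * V2) * Mm'"
    by (simp add: h assoc_mult_mat[OF P2 V2 Mm'])
  finally show ?thesis .
qed

lemma termA_carrier: assumes M: "rep M" and N: "rep N" and phi: "C1 M N \<phi>" shows
  "mp N (h,True) * \<phi> (h,False) + \<phi> (h,True) * mp M (h,False) \<in> carrier_mat (dimv N (tgt h)) (dimv M (tgt h))"
  by (rule add_carrier_mat[OF mult_carrier_mat[OF C1D(2)[OF phi] repD(2)[OF M]]])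

lemma termB_carrier: assumes M: "rep M" and N: "rep N" and phi: "C1 M N \<phi>" shows
  "mp N (h,False) * \<phi> (h,True) + \<phi> (h,False) * mp M (h,True) \<in> carrier_mat (dimv N (src h)) (dimv M (src h))"
  by (rule add_carrier_mat[OF mult_carrier_mat[OF C1D(3)[OF phi] repD(1)[OF M]]])

lemma d1_comp_left: assumes M: "rep M" and N: "rep N" and N': "rep N'" and phi: "C1 M N \<phi>"
  and u: "pi_hom src tgt N N' u"
  shows "d1 M N' (\<lambda>e. u (dt e) * \<phi> e) i = u i * d1 M N \<phi> i"
proof -
  note uc = C0D[OF homD(1)[OF u]]
  have cA: "\<And>h. h \<in> {h. tgt h = i} \<Longrightarrow> mp N (h,True) * \<phi> (h,False) + \<phi> (h,True) * mp M (h,False) \<in> carrier_mat (dimv N i) (dimv M i)"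
    using termA_carrier[OF M N phi] by auto
  have cB: "\<And>h. h \<in> {h. src h = i} \<Longrightarrow> mp N (h,False) * \<phi> (h,True) + \<phi> (h,False) * mp M (h,True) \<in> carrier_mat (dimv N i) (dimv M i)"
    using termB_carrier[OF M N phi] by auto
  have "u i * d1 M N \<phi> i = msum (dimv N' i) (dimv M i) {h. tgt h = i} (\<lambda>h. u i * (mp N (h,True) * \<phi> (h,False) + \<phi> (h,True) * mp M (h,False)))
     - msum (dimv N' i) (dimv M i) {h. src h = i} (\<lambda>h. u i * (mp N (h,False) * \<phi> (h,True) + \<phi> (h,False) * mp M (h,True)))"
    unfolding d1_def mult_minus_distrib_mat[OF uc msum_carrier msum_carrier]
    apply (subst msum_mult_left[OF uc[of i]])
    using cA apply blast
    apply (subst msum_mult_left[OF uc[of i]])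
    using cB apply blast
    ..
  also have "\<dots> = d1 M N' (\<lambda>e. u (dt e) * \<phi> e) i"
    unfolding d1_def
  proof (intro arg_cong2[where f = minus] msum_cong)
    fix h assume "h \<in> {h. tgt h = i}"
    then have hi: "tgt h = i" by simp
    show "u i * (mp N (h,True) * \<phi> (h,False) + \<phi> (h,True) * mp M (h,False)) =
      mp N' (h, True) * (u (dt (h, False)) * \<phi> (h, False)) + u (dt (h, True)) * \<phi> (h, True) * mp M (h, False)"
      using aux_left[OF uc[of "tgt h"] repD(1)[OF N] C1D(3)[OF phi] C1D(2)[OF phi] repD(2)[OF M]
         repD(1)[OF N'] uc[of "src h"] homD(3)[OF u]] hi by simp
  next
    fix h assume "h \<in> {h. src h = i}"
    then have hi: "src h = i" by simp
    show "u i * (mp N (h,False) * \<phi> (h,True) + \<phi> (h,False) * mp M (h,True)) =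
      mp N' (h, False) * (u (dt (h, True)) * \<phi> (h, True)) + u (dt (h, False)) * \<phi> (h, False) * mp M (h, True)"
      using aux_left[OF uc[of "src h"] repD(2)[OF N] C1D(2)[OF phi] C1D(3)[OF phi] repD(1)[OF M]
         repD(2)[OF N'] uc[of "tgt h"] homD(4)[OF u]] hi by simp
  qed
  finally show ?thesis by simp
qed

lemma d1_comp_right: assumes M: "rep M" and N: "rep N" and M': "rep M'" and phi: "C1 M N \<phi>"
  and v: "pi_hom src tgt M' M v"
  shows "d1 M' N (\<lambda>e. \<phi> e * v (ds e)) i = d1 M N \<phi> i * v i"
proof -
  note vc = C0D[OF homD(1)[OF v]]
  have cA: "\<And>h. h \<in> {h. tgt h = i} \<Longrightarrow> mp N (h,True) * \<phi> (h,False) + \<phi> (h,True) * mp M (h,False) \<in> carrier_mat (dimv N i) (dimv M i)"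
    using termA_carrier[OF M N phi] by auto
  have cB: "\<And>h. h \<in> {h. src h = i} \<Longrightarrow> mp N (h,False) * \<phi> (h,True) + \<phi> (h,False) * mp M (h,True) \<in> carrier_mat (dimv N i) (dimv M i)"
    using termB_carrier[OF M N phi] by auto
  have "d1 M N \<phi> i * v i = msum (dimv N i) (dimv M' i) {h. tgt h = i} (\<lambda>h. (mp N (h,True) * \<phi> (h,False) + \<phi> (h,True) * mp M (h,False)) * v i)
     - msum (dimv N i) (dimv M' i) {h. src h = i} (\<lambda>h. (mp N (h,False) * \<phi> (h,True) + \<phi> (h,False) * mp M (h,True)) * v i)"
    unfolding d1_def minus_mult_distrib_mat[OF msum_carrier msum_carrier vc]
    apply (subst msum_mult_right[OF vc[of i]])
    using cA apply blast
    apply (subst msum_mult_right[OF vc[of i]])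
    using cB apply blast
    ..
  also have "\<dots> = d1 M' N (\<lambda>e. \<phi> e * v (ds e)) i"
    unfolding d1_def
  proof (intro arg_cong2[where f = minus] msum_cong)
    fix h assume "h \<in> {h. tgt h = i}"
    then have hi: "tgt h = i" by simp
    show "(mp N (h,True) * \<phi> (h,False) + \<phi> (h,True) * mp M (h,False)) * v i =
      mp N (h, True) * (\<phi> (h, False) * v (ds (h, False))) + \<phi> (h, True) * v (ds (h, True)) * mp M' (h, False)"
      using aux_right[OF vc[of "tgt h"] repD(1)[OF N] C1D(3)[OF phi] C1D(2)[OF phi] repD(2)[OF M]
         repD(2)[OF M'] vc[of "src h"] homD(4)[OF v, symmetric]] hi by simp
  next
    fix h assume "h \<in> {h. src h = i}"
    then have hi: "src h = i" by simp
    show "(mp N (h,False) * \<phi> (h,True) + \<phi> (h,False) * mp M (h,True)) * v i =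
      mp N (h, False) * (\<phi> (h, True) * v (ds (h, True))) + \<phi> (h, False) * v (ds (h, False)) * mp M' (h, True)"
      using aux_right[OF vc[of "src h"] repD(2)[OF N] C1D(2)[OF phi] C1D(3)[OF phi] repD(1)[OF M]
         repD(1)[OF M'] vc[of "tgt h"] homD(3)[OF v, symmetric]] hi by simp
  qed
  finally show ?thesis by simp
qed

lemma d1_minus: assumes M: "rep M" and N: "rep N" and phi: "C1 M N \<phi>" and psi: "C1 M N \<psi>"
  shows "d1 M N (\<lambda>e. \<phi> e - \<psi> e) i = d1 M N \<phi> i - d1 M N \<psi> i"
proof -
  define fA where "fA \<chi> h = mp N (h,True) * \<chi> (h,False) + \<chi> (h,True) * mp M (h,False)" for \<chi> h
  define fB where "fB \<chi> h = mp N (h,False) * \<chi> (h,True) + \<chi> (h,False) * mp M (h,True)" for \<chi> h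
  have d1e: "d1 M N \<chi> i = msum (dimv N i) (dimv M i) {h. tgt h = i} (fA \<chi>) - msum (dimv N i) (dimv M i) {h. src h = i} (fB \<chi>)" for \<chi>
    unfolding d1_def fA_def fB_def ..
  have cA: "\<And>h. h \<in> {h. tgt h = i} \<Longrightarrow> fA \<chi> h \<in> carrier_mat (dimv N i) (dimv M i)" if "C1 M N \<chi>" for \<chi>
    using termA_carrier[OF M N that] unfolding fA_def by auto
  have cB: "\<And>h. h \<in> {h. src h = i} \<Longrightarrow> fB \<chi> h \<in> carrier_mat (dimv N i) (dimv M i)" if "C1 M N \<chi>" for \<chi>
    using termB_carrier[OF M N that] unfolding fB_def by auto
  have "d1 M N (\<lambda>e. \<phi> e - \<psi> e) i = msum (dimv N i) (dimv M i) {h. tgt h = i} (\<lambda>h. fA \<phi> h - fA \<psi> h)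
     - msum (dimv N i) (dimv M i) {h. src h = i} (\<lambda>h. fB \<phi> h - fB \<psi> h)"
    unfolding d1e
  proof (intro arg_cong2[where f = minus] msum_cong)
    fix h
    show "fA (\<lambda>e. \<phi> e - \<psi> e) h = fA \<phi> h - fA \<psi> h"
      unfolding fA_def by (rule aux_minus[OF repD(1)[OF N] C1D(3)[OF phi] C1D(3)[OF psi] C1D(2)[OF phi] C1D(2)[OF psi] repD(2)[OF M]])
    show "fB (\<lambda>e. \<phi> e - \<psi> e) h = fB \<phi> h - fB \<psi> h"
      unfolding fB_def by (rule aux_minus[OF repD(2)[OF N] C1D(2)[OF phi] C1D(2)[OF psi] C1D(3)[OF phi] C1D(3)[OF psi] repD(1)[OF M]])
  qed
  also have "\<dots> = (msum (dimv N i) (dimv M i) {h. tgt h = i} (fA \<phi>) - msum (dimv N i) (dimv M i) {h. tgt h = i} (fA \<psi>))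
     - (msum (dimv N i) (dimv M i) {h. src h = i} (fB \<phi>) - msum (dimv N i) (dimv M i) {h. src h = i} (fB \<psi>))"
    apply (subst msum_minus)
      apply (erule cA[OF phi], erule cA[OF psi])
    apply (subst msum_minus)
      apply (erule cB[OF phi], erule cB[OF psi])
    ..
  also have "\<dots> = d1 M N \<phi> i - d1 M N \<psi> i"
    unfolding d1e by (rule madd1) auto
  finally show ?thesis .
qed

lemma d1_d0: assumes M: "rep M" and N: "rep N" and s: "C0 M N \<sigma>"
  shows "d1 M N (d0 M N \<sigma>) i = \<sigma> i * relm M i - relm N i * \<sigma> i"
proof -
  note sc = C0D[OF s]
  have cMA: "\<And>h. h \<in> {h. tgt h = i} \<Longrightarrow> mp M (h,True) * mp M (h,False) \<in> carrier_mat (dimv M i) (dimv M i)"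
    using mult_carrier_mat[OF repD(1)[OF M] repD(2)[OF M]] by auto
  have cMB: "\<And>h. h \<in> {h. src h = i} \<Longrightarrow> mp M (h,False) * mp M (h,True) \<in> carrier_mat (dimv M i) (dimv M i)"
    using mult_carrier_mat[OF repD(2)[OF M] repD(1)[OF M]] by auto
  have cNA: "\<And>h. h \<in> {h. tgt h = i} \<Longrightarrow> mp N (h,True) * mp N (h,False) \<in> carrier_mat (dimv N i) (dimv N i)"
    using mult_carrier_mat[OF repD(1)[OF N] repD(2)[OF N]] by auto
  have cNB: "\<And>h. h \<in> {h. src h = i} \<Longrightarrow> mp N (h,False) * mp N (h,True) \<in> carrier_mat (dimv N i) (dimv N i)"
    using mult_carrier_mat[OF repD(2)[OF N] repD(1)[OF N]] by auto
  have "d1 M N (d0 M N \<sigma>) i =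
      msum (dimv N i) (dimv M i) {h. tgt h = i} (\<lambda>h. \<sigma> i * (mp M (h,True) * mp M (h,False)) - (mp N (h,True) * mp N (h,False)) * \<sigma> i)
    - msum (dimv N i) (dimv M i) {h. src h = i} (\<lambda>h. \<sigma> i * (mp M (h,False) * mp M (h,True)) - (mp N (h,False) * mp N (h,True)) * \<sigma> i)"
    unfolding d1_def
  proof (intro arg_cong2[where f = minus] msum_cong)
    fix h assume "h \<in> {h. tgt h = i}"
    then have hi: "tgt h = i" by simp
    show "mp N (h, True) * d0 M N \<sigma> (h, False) + d0 M N \<sigma> (h, True) * mp M (h, False) =
       \<sigma> i * (mp M (h,True) * mp M (h,False)) - (mp N (h,True) * mp N (h,False)) * \<sigma> i"
      unfolding d0_def using aux_d0[OF repD(1)[OF N] repD(2)[OF N] repD(1)[OF M] repD(2)[OF M] sc[of "tgt h"] sc[of "src h"]] hi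
      by simp
  next
    fix h assume "h \<in> {h. src h = i}"
    then have hi: "src h = i" by simp
    show "mp N (h, False) * d0 M N \<sigma> (h, True) + d0 M N \<sigma> (h, False) * mp M (h, True) =
       \<sigma> i * (mp M (h,False) * mp M (h,True)) - (mp N (h,False) * mp N (h,True)) * \<sigma> i"
      unfolding d0_def using aux_d0[OF repD(2)[OF N] repD(1)[OF N] repD(2)[OF M] repD(1)[OF M] sc[of "src h"] sc[of "tgt h"]] hi
      by simp
  qed
  also have "\<dots> = (\<sigma> i * msum (dimv M i) (dimv M i) {h. tgt h = i} (\<lambda>h. mp M (h,True) * mp M (h,False))
        - msum (dimv N i) (dimv N i) {h. tgt h = i} (\<lambda>h. mp N (h,True) * mp N (h,False)) * \<sigma> i)
     - (\<sigma> i * msum (dimv M i) (dimv M i) {h. src h = i} (\<lambda>h. mp M (h,False) * mp M (h,True))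
        - msum (dimv N i) (dimv N i) {h. src h = i} (\<lambda>h. mp N (h,False) * mp N (h,True)) * \<sigma> i)"
    apply (subst msum_minus)
      apply (rule mult_carrier_mat[OF sc], erule cMA)
     apply (rule mult_carrier_mat[OF _ sc], erule cNA)
    apply (subst msum_minus)
      apply (rule mult_carrier_mat[OF sc], erule cMB)
     apply (rule mult_carrier_mat[OF _ sc], erule cNB)
    apply (subst msum_mult_left[OF sc, symmetric], erule cMA)
    apply (subst msum_mult_left[OF sc, symmetric], erule cMB)
    apply (subst msum_mult_right[OF sc, symmetric], erule cNA)
    apply (subst msum_mult_right[OF sc, symmetric], erule cNB)
    ..
  also have "\<dots> = \<sigma> i * relm M i - relm N i * \<sigma> i"
    unfolding relm_def
    apply (subst mult_minus_distrib_mat[OF sc msum_carrier msum_carrier])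
    apply (subst minus_mult_distrib_mat[OF msum_carrier msum_carrier sc])
    by (rule madd1) (auto intro: mult_carrier_mat[OF sc msum_carrier] mult_carrier_mat[OF msum_carrier sc])
  finally show ?thesis .
qed

lemma Zc_d0: assumes M: "pi_module src tgt M" and N: "pi_module src tgt N" and s: "C0 M N \<sigma>"
  shows "Zc M N (d0 M N \<sigma>)"
proof -
  have rM: "rep M" and rN: "rep N" using M N pi_module_iff by auto
  have "d1 M N (d0 M N \<sigma>) i = 0\<^sub>m (dimv N i) (dimv M i)" for i
    using d1_d0[OF rM rN s, of i] M N C0D[OF s, of i] unfolding pi_module_iff by simp
  then show ?thesis unfolding Zc_def using d0_C1[OF rM rN s] by simp
qed

end

lemma madd5: fixes a :: "'k::field mat"
  shows "a \<in> carrier_mat n m \<Longrightarrow> b \<in> carrier_mat n m \<Longrightarrow> a - b + b = a"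
  by (intro eq_matI) auto

lemma lift_mat:
  fixes F :: "'k::field mat"
  assumes F: "F \<in> carrier_mat nB nA" and X: "X \<in> carrier_mat nB m"
    and ex: "\<And>j. j < m \<Longrightarrow> \<exists>u\<in>carrier_vec nA. F *\<^sub>v u = col X j"
  shows "\<exists>Y\<in>carrier_mat nA m. F * Y = X"
proof -
  define U where "U j = (SOME u. u \<in> carrier_vec nA \<and> F *\<^sub>v u = col X j)" for j
  have U: "U j \<in> carrier_vec nA \<and> F *\<^sub>v U j = col X j" if "j < m" for j
    using ex[OF that] unfolding U_def by (metis (mono_tags, lifting) someI_ex)
  define Y where "Y = mat nA m (\<lambda>(r,c). U c $ r)"
  have Yc: "Y \<in> carrier_mat nA m" unfolding Y_def by simp
  have colY: "col Y j = U j" if "j < m" for j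
    using U[OF that] that unfolding Y_def by (auto intro!: eq_vecI)
  have "F * Y = X"
  proof (rule mat_col_eqI)
    fix j assume "j < dim_col X"
    then have j: "j < m" using X by auto
    show "col (F * Y) j = col X j" using col_mult2[OF F Yc j] colY[OF j] U[OF j] by simp
  qed (use F X Yc in auto)
  then show ?thesis using Yc by blast
qed

lemma inj_mat:
  fixes F :: "'k::field mat"
  assumes F: "F \<in> carrier_mat nB nA"
    and inj: "\<forall>u\<in>carrier_vec nA. F *\<^sub>v u = 0\<^sub>v nB \<longrightarrow> u = 0\<^sub>v nA"
    and Y: "Y \<in> carrier_mat nA m" and Y': "Y' \<in> carrier_mat nA m" and eq: "F * Y = F * Y'"
  shows "Y = Y'"
proof (rule mat_col_eqI)
  fix j assume "j < dim_col Y'"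
  then have j: "j < m" using Y' by auto
  have c1: "col Y j \<in> carrier_vec nA" "col Y' j \<in> carrier_vec nA" using Y Y' j by auto
  have "F *\<^sub>v (col Y j - col Y' j) = F *\<^sub>v col Y j - F *\<^sub>v col Y' j"
    by (rule mult_minus_distrib_mat_vec[OF F c1])
  also have "\<dots> = col (F * Y) j - col (F * Y') j" using col_mult2[OF F Y j] col_mult2[OF F Y' j] by simp
  also have "\<dots> = 0\<^sub>v nB" using eq F Y' j by simp
  finally have "col Y j - col Y' j = 0\<^sub>v nA" using inj c1 by auto
  then show "col Y j = col Y' j"
    using c1 by (metis (no_types, lifting) carrier_vecD eq_vecI index_minus_vec(1) index_zero_vec(1) right_minus_eq)
qed (use Y Y' in auto)

lemma mat_unit_col: "(A :: 'a :: semiring_1 mat) \<in> carrier_mat n m \<Longrightarrow> j < m \<Longrightarrow> A *\<^sub>v unit_vec m j = col A j"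
  by (intro eq_vecI) (auto simp: scalar_prod_right_unit)

context Q begin

lemma ses_parts: assumes "pi_ses src tgt A B C f g"
  shows "pi_module src tgt A" "pi_module src tgt B" "pi_module src tgt C"
    "pi_hom src tgt A B f" "pi_hom src tgt B C g"
    "rep A" "rep B" "rep C"
    "\<And>i. f i \<in> carrier_mat (dimv B i) (dimv A i)" "\<And>i. g i \<in> carrier_mat (dimv C i) (dimv B i)"
    "\<And>i. \<forall>u \<in> carrier_vec (dimv A i). f i *\<^sub>v u = 0\<^sub>v (dimv B i) \<longrightarrow> u = 0\<^sub>v (dimv A i)"
    "\<And>i v. v \<in> carrier_vec (dimv B i) \<Longrightarrow>
        (g i *\<^sub>v v = 0\<^sub>v (dimv C i)) \<longleftrightarrow> (\<exists>u \<in> carrier_vec (dimv A i). f i *\<^sub>v u = v)"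
    "\<And>i w. w \<in> carrier_vec (dimv C i) \<Longrightarrow> \<exists>v \<in> carrier_vec (dimv B i). g i *\<^sub>v v = w"
  using assms unfolding pi_ses_def pi_module_iff pi_hom_def by blast+

lemma ses_t: assumes "pi_ses src tgt A B C f g"
  shows "\<exists>t. C0 C B t \<and> (\<forall>i. g i * t i = 1\<^sub>m (dimv C i))"
proof -
  note p = ses_parts[OF assms]
  have "\<exists>t\<in>carrier_mat (dimv B i) (dimv C i). g i * t = 1\<^sub>m (dimv C i)" for i
    by (rule lift_mat[OF p(10)]) (auto intro: p(13))
  then obtain t where "\<And>i. t i \<in> carrier_mat (dimv B i) (dimv C i) \<and> g i * t i = 1\<^sub>m (dimv C i)"
    by metis
  then show ?thesis unfolding C0_def by blast
qed

lemma ses_lift: assumes "pi_ses src tgt A B C f g" and X: "X \<in> carrier_mat (dimv B i) m"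
  and gX: "g i * X = 0\<^sub>m (dimv C i) m"
  shows "\<exists>Y\<in>carrier_mat (dimv A i) m. f i * Y = X"
proof (rule lift_mat[OF ses_parts(9)[OF assms(1)] X])
  fix j assume j: "j < m"
  have "g i *\<^sub>v col X j = col (g i * X) j" using col_mult2[OF ses_parts(10)[OF assms(1)] X j] by simp
  also have "\<dots> = 0\<^sub>v (dimv C i)" using gX j by simp
  finally show "\<exists>u\<in>carrier_vec (dimv A i). f i *\<^sub>v u = col X j"
    using ses_parts(12)[OF assms(1), of "col X j" i] X j by auto
qed

lemma ses_inj: assumes "pi_ses src tgt A B C f g" and "Y \<in> carrier_mat (dimv A i) m"
  and "Y' \<in> carrier_mat (dimv A i) m" and "f i * Y = f i * Y'"
  shows "Y = Y'"
  by (rule inj_mat[OF ses_parts(9)[OF assms(1)] ses_parts(11)[OF assms(1)] assms(2-4)])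

lemma ses_gf: assumes "pi_ses src tgt A B C f g"
  shows "g i * f i = 0\<^sub>m (dimv C i) (dimv A i)"
proof -
  note p = ses_parts[OF assms]
  have "col (g i * f i) j = col (0\<^sub>m (dimv C i) (dimv A i)) j" if j: "j < dimv A i" for j
  proof -
    have "col (g i * f i) j = g i *\<^sub>v col (f i) j" using col_mult2[OF p(10) p(9) j] .
    also have "\<dots> = 0\<^sub>v (dimv C i)"
      using p(12)[of "col (f i) j" i] mat_unit_col[OF p(9) j] p(9) j by auto
    finally show ?thesis using j by simp
  qed
  then show ?thesis by (intro mat_col_eqI) (use p(9,10) in auto)
qed


lemma ses_R: assumes ses: "pi_ses src tgt A B C f g" and t: "C0 C B t" "\<And>i. g i * t i = 1\<^sub>m (dimv C i)"
  shows "\<exists>R. \<forall>i. R i \<in> carrier_mat (dimv A i) (dimv B i) \<and> R i * f i = 1\<^sub>m (dimv A i)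
     \<and> f i * R i + t i * g i = 1\<^sub>m (dimv B i)"
proof -
  note p = ses_parts[OF ses]
  have "\<exists>R\<in>carrier_mat (dimv A i) (dimv B i). R * f i = 1\<^sub>m (dimv A i) \<and> f i * R + t i * g i = 1\<^sub>m (dimv B i)" for i
  proof -
    note ti = C0D[OF t(1), of i] and fi = p(9)[of i] and gi = p(10)[of i]
    have tg: "t i * g i \<in> carrier_mat (dimv B i) (dimv B i)" using ti gi by simp
    have X: "1\<^sub>m (dimv B i) - t i * g i \<in> carrier_mat (dimv B i) (dimv B i)" by (rule minus_carrier_mat[OF tg])
    have "g i * (1\<^sub>m (dimv B i) - t i * g i) = g i * 1\<^sub>m (dimv B i) - g i * (t i * g i)"
      by (rule mult_minus_distrib_mat[OF gi one_carrier_mat tg])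
    also have "\<dots> = g i - (g i * t i) * g i" using assoc_mult_mat[OF gi ti gi] gi by simp
    also have "\<dots> = 0\<^sub>m (dimv C i) (dimv B i)" using t(2) gi by simp
    finally obtain R where R: "R \<in> carrier_mat (dimv A i) (dimv B i)" "f i * R = 1\<^sub>m (dimv B i) - t i * g i"
      using ses_lift[OF ses X] by blast
    have "f i * (R * f i) = (f i * R) * f i" using assoc_mult_mat[OF fi R(1) fi] by simp
    also have "\<dots> = f i - t i * (g i * f i)"
      unfolding R(2) using minus_mult_distrib_mat[OF one_carrier_mat tg fi] assoc_mult_mat[OF ti gi fi] fi by simp
    also have "\<dots> = f i * 1\<^sub>m (dimv A i)" using ses_gf[OF ses, of i] fi ti by (auto intro!: eq_matI)
    finally have "R * f i = 1\<^sub>m (dimv A i)"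
      by (rule ses_inj[OF ses mult_carrier_mat[OF R(1) fi] one_carrier_mat])
    moreover have "f i * R + t i * g i = 1\<^sub>m (dimv B i)" unfolding R(2)
      by (rule madd5[OF one_carrier_mat tg])
    ultimately show ?thesis using R(1) by blast
  qed
  then show ?thesis by metis
qed

lemma ses_cancel_g: assumes ses: "pi_ses src tgt A B C f g" and t: "C0 C B t" "\<And>i. g i * t i = 1\<^sub>m (dimv C i)"
  and X: "X \<in> carrier_mat p (dimv C i)" and Xg: "X * g i = 0\<^sub>m p (dimv B i)"
  shows "X = 0\<^sub>m p (dimv C i)"
proof -
  note ti = C0D[OF t(1), of i] and gi = ses_parts(10)[OF ses, of i]
  have "X = X * (g i * t i)" using t(2) X by simp
  also have "\<dots> = (X * g i) * t i" using assoc_mult_mat[OF X gi ti] by simp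
  also have "\<dots> = 0\<^sub>m p (dimv C i)" using Xg ti by simp
  finally show ?thesis .
qed

lemma ses_factor_f: assumes ses: "pi_ses src tgt A B C f g" and t: "C0 C B t" "\<And>i. g i * t i = 1\<^sub>m (dimv C i)"
  and X: "X \<in> carrier_mat p (dimv B i)" and Xf: "X * f i = 0\<^sub>m p (dimv A i)"
  shows "X = (X * t i) * g i"
proof -
  note ti = C0D[OF t(1), of i] and gi = ses_parts(10)[OF ses, of i] and fi = ses_parts(9)[OF ses, of i]
  obtain R where R: "R i \<in> carrier_mat (dimv A i) (dimv B i)" "f i * R i + t i * g i = 1\<^sub>m (dimv B i)"
    using ses_R[OF ses t] by blast
  have "X = X * (f i * R i + t i * g i)" using R(2) X by simp
  also have "\<dots> = X * (f i * R i) + X * (t i * g i)"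
    by (rule mult_add_distrib_mat[OF X mult_carrier_mat[OF fi R(1)] mult_carrier_mat[OF ti gi]])
  also have "\<dots> = (X * f i) * R i + (X * t i) * g i"
    using assoc_mult_mat[OF X fi R(1)] assoc_mult_mat[OF X ti gi] by simp
  also have "\<dots> = (X * t i) * g i" using Xf R(1) X ti gi by simp
  finally show ?thesis .
qed

lemma C1_comp_left: "C1 M N \<phi> \<Longrightarrow> C0 N N' u \<Longrightarrow> C1 M N' (\<lambda>e. u (dt e) * \<phi> e)"
  unfolding C1_def C0_def by (metis mult_carrier_mat)

lemma C1_comp_right: "C1 M N \<phi> \<Longrightarrow> C0 M' M v \<Longrightarrow> C1 M' N (\<lambda>e. \<phi> e * v (ds e))"
  unfolding C1_def C0_def by (metis mult_carrier_mat)

lemma C0_comp: "C0 M N \<sigma> \<Longrightarrow> C0 N N' u \<Longrightarrow> C0 M N' (\<lambda>i. u i * \<sigma> i)"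
  unfolding C0_def by (metis mult_carrier_mat)

lemma C1_minus: "C1 M N \<phi> \<Longrightarrow> C1 M N \<psi> \<Longrightarrow> C1 M N (\<lambda>e. \<phi> e - \<psi> e)"
  unfolding C1_def by (metis minus_carrier_mat)

lemma C0_minus: "C0 M N \<phi> \<Longrightarrow> C0 M N \<psi> \<Longrightarrow> C0 M N (\<lambda>e. \<phi> e - \<psi> e)"
  unfolding C0_def by (metis minus_carrier_mat)

lemma C0_add: "C0 M N \<phi> \<Longrightarrow> C0 M N \<psi> \<Longrightarrow> C0 M N (\<lambda>e. \<phi> e + \<psi> e)"
  unfolding C0_def by (metis add_carrier_mat)

lemma Zc_comp_left: assumes "rep M" "rep N" "rep N'" "Zc M N \<phi>" "pi_hom src tgt N N' u"
  shows "Zc M N' (\<lambda>e. u (dt e) * \<phi> e)"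
  using assms d1_comp_left[OF assms(1-3) _ assms(5)] C1_comp_left[OF _ homD(1)[OF assms(5)]]
  unfolding Zc_def by (simp add: right_mult_zero_mat[OF C0D[OF homD(1)[OF assms(5)]]])

lemma Zc_comp_right: assumes "rep M" "rep N" "rep M'" "Zc M N \<phi>" "pi_hom src tgt M' M v"
  shows "Zc M' N (\<lambda>e. \<phi> e * v (ds e))"
  using assms d1_comp_right[OF assms(1-3) _ assms(5)] C1_comp_right[OF _ homD(1)[OF assms(5)]]
  unfolding Zc_def by (simp add: left_mult_zero_mat[OF C0D[OF homD(1)[OF assms(5)]]])

lemma Zc_minus: assumes "rep M" "rep N" "Zc M N \<phi>" "Zc M N \<psi>"
  shows "Zc M N (\<lambda>e. \<phi> e - \<psi> e)"
proof -
  have c: "C1 M N \<phi>" "C1 M N \<psi>" using assms(3,4) unfolding Zc_def by auto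
  show ?thesis using assms(3,4) d1_minus[OF assms(1,2) c] C1_minus[OF c] unfolding Zc_def by simp
qed

lemma Zc_cancel_f: assumes ses: "pi_ses src tgt A B C f g" and M: "rep M" and psi: "C1 M A \<psi>"
  and Z: "Zc M B (\<lambda>e. f (dt e) * \<psi> e)"
  shows "Zc M A \<psi>"
proof -
  note p = ses_parts[OF ses]
  have "d1 M A \<psi> i = 0\<^sub>m (dimv A i) (dimv M i)" for i
  proof (rule ses_inj[OF ses d1_carrier zero_carrier_mat])
    have "f i * d1 M A \<psi> i = d1 M B (\<lambda>e. f (dt e) * \<psi> e) i"
      using d1_comp_left[OF M p(6) p(7) psi p(4)] by simp
    also have "\<dots> = 0\<^sub>m (dimv B i) (dimv M i)" using Z unfolding Zc_def by simp
    finally show "f i * d1 M A \<psi> i = f i * 0\<^sub>m (dimv A i) (dimv M i)" using p(9)[of i] by simp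
  qed
  then show ?thesis using psi unfolding Zc_def by simp
qed

lemma Zc_cancel_g: assumes ses: "pi_ses src tgt A B C f g" and t: "C0 C B t" "\<And>i. g i * t i = 1\<^sub>m (dimv C i)"
  and N: "rep N" and chi: "C1 C N \<chi>" and Z: "Zc B N (\<lambda>e. \<chi> e * g (ds e))"
  shows "Zc C N \<chi>"
proof -
  note p = ses_parts[OF ses]
  have "d1 C N \<chi> i = 0\<^sub>m (dimv N i) (dimv C i)" for i
  proof (rule ses_cancel_g[OF ses t d1_carrier])
    have "d1 C N \<chi> i * g i = d1 B N (\<lambda>e. \<chi> e * g (ds e)) i"
      using d1_comp_right[OF p(8) N p(7) chi p(5)] by simp
    also have "\<dots> = 0\<^sub>m (dimv N i) (dimv B i)" using Z unfolding Zc_def by simp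
    finally show "d1 C N \<chi> i * g i = 0\<^sub>m (dimv N i) (dimv B i)" .
  qed
  then show ?thesis using chi unfolding Zc_def by simp
qed

end

lemma madd6: fixes a :: "'k::field mat"
  shows "a \<in> carrier_mat n m \<Longrightarrow> b \<in> carrier_mat n m \<Longrightarrow> a + (b - a) = b"
  by (intro eq_matI) auto

lemma madd7: fixes a :: "'k::field mat"
  shows "a \<in> carrier_mat n m \<Longrightarrow> a - 0\<^sub>m n m = a"
  by (intro eq_matI) auto

context Q begin

lemma claimA:
  assumes ses: "pi_ses src tgt x2 x x1 f g"
    and h22: "H1z x2 x2" and hx1: "H1z x x1" and h1x: "H1z x1 x"
  shows "H1z x x"
  unfolding H1z_def
proof (intro allI impI)
  fix \<phi> assume Zphi: "Zc x x \<phi>"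
  note p = ses_parts[OF ses]
  note rx2 = p(6) and rx = p(7) and rx1 = p(8) and fhom = p(4) and ghom = p(5)
  note fc = p(9) and gc = p(10)
  obtain t where t: "C0 x1 x t" "\<And>i. g i * t i = 1\<^sub>m (dimv x1 i)" using ses_t[OF ses] by blast
  note tc = C0D[OF t(1)]
  obtain R where R: "\<And>i. R i \<in> carrier_mat (dimv x2 i) (dimv x i)" "\<And>i. R i * f i = 1\<^sub>m (dimv x2 i)"
    using ses_R[OF ses t] by blast
  have phic: "C1 x x \<phi>" using Zphi unfolding Zc_def by simp
  note phie = C1D(1)[OF phic]
  have "Zc x x1 (\<lambda>e. g (dt e) * \<phi> e)" by (rule Zc_comp_left[OF rx rx rx1 Zphi ghom])
  then obtain \<tau> where tau: "C0 x x1 \<tau>" "d0 x x1 \<tau> = (\<lambda>e. g (dt e) * \<phi> e)"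
    using hx1 unfolding H1z_def by blast
  define \<tau>' where "\<tau>' i = t i * \<tau> i" for i
  have tau'c: "C0 x x \<tau>'" unfolding \<tau>'_def by (rule C0_comp[OF tau(1) t(1)])
  have gtau': "(\<lambda>i. g i * \<tau>' i) = \<tau>"
  proof (rule ext)
    fix i
    have "g i * \<tau>' i = (g i * t i) * \<tau> i" unfolding \<tau>'_def using assoc_mult_mat[OF gc tc C0D[OF tau(1)]] by simp
    also have "\<dots> = \<tau> i" using t(2) left_mult_one_mat[OF C0D[OF tau(1)]] by simp
    finally show "g i * \<tau>' i = \<tau> i" .
  qed
  have d0tau: "d0 x x1 \<tau> e = g (dt e) * d0 x x \<tau>' e" for e
    using d0_comp_left[OF rx rx rx1 tau'c ghom, of e] gtau' by simp
  note d0tau'c = C1D(1)[OF d0_C1[OF rx rx tau'c]]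
  define X where "X e = \<phi> e - d0 x x \<tau>' e" for e
  have Xc: "X e \<in> carrier_mat (dimv x (dt e)) (dimv x (ds e))" for e
    unfolding X_def using phie d0tau'c by (metis minus_carrier_mat)
  have gX: "g (dt e) * X e = 0\<^sub>m (dimv x1 (dt e)) (dimv x (ds e))" for e
  proof -
    have "g (dt e) * X e = g (dt e) * \<phi> e - g (dt e) * d0 x x \<tau>' e"
      unfolding X_def by (rule mult_minus_distrib_mat[OF gc phie d0tau'c])
    also have "\<dots> = 0\<^sub>m (dimv x1 (dt e)) (dimv x (ds e))"
      using d0tau[of e] tau(2) mult_carrier_mat[OF gc phie] by (metis minus_r_inv_mat) 
    finally show ?thesis .
  qed
  have "\<exists>Y\<in>carrier_mat (dimv x2 (dt e)) (dimv x (ds e)). f (dt e) * Y = X e" for e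
    by (rule ses_lift[OF ses Xc gX])
  then obtain \<psi> where psi: "\<And>e. \<psi> e \<in> carrier_mat (dimv x2 (dt e)) (dimv x (ds e))"
    "\<And>e. f (dt e) * \<psi> e = X e" by metis
  have psic: "C1 x x2 \<psi>" unfolding C1_def using psi(1) by blast
  have "Zc x x (\<lambda>e. f (dt e) * \<psi> e)"
    unfolding psi(2) X_def by (rule Zc_minus[OF rx rx Zphi Zc_d0[OF p(2) p(2) tau'c]])
  then have Zpsi: "Zc x x2 \<psi>" by (rule Zc_cancel_f[OF ses rx psic])
  have "Zc x2 x2 (\<lambda>e. \<psi> e * f (ds e))" by (rule Zc_comp_right[OF rx rx2 rx2 Zpsi fhom])
  then obtain \<rho> where rho: "C0 x2 x2 \<rho>" "d0 x2 x2 \<rho> = (\<lambda>e. \<psi> e * f (ds e))"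
    using h22 unfolding H1z_def by blast
  define \<rho>' where "\<rho>' i = \<rho> i * R i" for i
  have rho'c: "C0 x x2 \<rho>'" unfolding \<rho>'_def C0_def using C0D[OF rho(1)] R(1) by (metis mult_carrier_mat)
  have rho'f: "(\<lambda>i. \<rho>' i * f i) = \<rho>"
    unfolding \<rho>'_def using assoc_mult_mat[OF C0D[OF rho(1)] R(1) fc] R(2) right_mult_one_mat[OF C0D[OF rho(1)]] by auto
  have d0rho: "d0 x2 x2 \<rho> e = d0 x x2 \<rho>' e * f (ds e)" for e
    using d0_comp_right[OF rx rx2 rx2 rho'c fhom, of e] rho'f by simp
  note d0rho'c = C1D(1)[OF d0_C1[OF rx rx2 rho'c]]
  define Y where "Y e = \<psi> e - d0 x x2 \<rho>' e" for e
  have Yc: "Y e \<in> carrier_mat (dimv x2 (dt e)) (dimv x (ds e))" for e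
    unfolding Y_def using psi(1) d0rho'c by (metis minus_carrier_mat)
  have Yf: "Y e * f (ds e) = 0\<^sub>m (dimv x2 (dt e)) (dimv x2 (ds e))" for e
  proof -
    have "Y e * f (ds e) = \<psi> e * f (ds e) - d0 x x2 \<rho>' e * f (ds e)"
      unfolding Y_def by (rule minus_mult_distrib_mat[OF psi(1) d0rho'c fc])
    also have "\<dots> = 0\<^sub>m (dimv x2 (dt e)) (dimv x2 (ds e))"
      using d0rho[of e] rho(2) mult_carrier_mat[OF psi(1) fc] by (metis minus_r_inv_mat)
    finally show ?thesis .
  qed
  define \<chi> where "\<chi> e = Y e * t (ds e)" for e
  have chic: "C1 x1 x2 \<chi>" unfolding C1_def \<chi>_def using Yc tc by (metis mult_carrier_mat)
  have Ychi: "Y e = \<chi> e * g (ds e)" for e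
    unfolding \<chi>_def by (rule ses_factor_f[OF ses t Yc Yf])
  have "Zc x x2 Y" unfolding Y_def by (rule Zc_minus[OF rx rx2 Zpsi Zc_d0[OF p(2) p(1) rho'c]])
  then have "Zc x x2 (\<lambda>e. \<chi> e * g (ds e))" using Ychi by (metis (no_types, lifting) ext)
  then have Zchi: "Zc x1 x2 \<chi>" by (rule Zc_cancel_g[OF ses t rx2 chic])
  have "Zc x1 x (\<lambda>e. f (dt e) * \<chi> e)" by (rule Zc_comp_left[OF rx1 rx2 rx Zchi fhom])
  then obtain \<mu> where mu: "C0 x1 x \<mu>" "d0 x1 x \<mu> = (\<lambda>e. f (dt e) * \<chi> e)"
    using h1x unfolding H1z_def by blast
  define \<sigma> where "\<sigma> i = \<tau>' i + ((f i * \<rho>' i) + \<mu> i * g i)" for i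
  have frho: "C0 x x (\<lambda>i. f i * \<rho>' i)" by (rule C0_comp[OF rho'c homD(1)[OF fhom]])
  have mug: "C0 x x (\<lambda>i. \<mu> i * g i)" unfolding C0_def using C0D[OF mu(1)] gc by (metis mult_carrier_mat)
  have sc: "C0 x x \<sigma>" unfolding \<sigma>_def by (intro C0_add tau'c frho mug)
  have "d0 x x \<sigma> e = \<phi> e" for e
  proof -
    have "d0 x x \<sigma> e = d0 x x \<tau>' e + (d0 x x (\<lambda>i. f i * \<rho>' i) e + d0 x x (\<lambda>i. \<mu> i * g i) e)"
      unfolding \<sigma>_def
      by (simp add: d0_add[OF rx rx tau'c C0_add[OF frho mug]] d0_add[OF rx rx frho mug])
    also have "d0 x x (\<lambda>i. f i * \<rho>' i) e = f (dt e) * d0 x x2 \<rho>' e"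
      by (rule d0_comp_left[OF rx rx2 rx rho'c fhom])
    also have "d0 x x (\<lambda>i. \<mu> i * g i) e = d0 x1 x \<mu> e * g (ds e)"
      by (rule d0_comp_right[OF rx1 rx rx mu(1) ghom])
    also have "\<dots> = f (dt e) * Y e"
      unfolding mu(2) Ychi using assoc_mult_mat[OF fc C1D(1)[OF chic] gc] by simp
    also have "f (dt e) * d0 x x2 \<rho>' e + f (dt e) * Y e = f (dt e) * (d0 x x2 \<rho>' e + Y e)"
      by (rule mult_add_distrib_mat[OF fc d0rho'c Yc, symmetric])
    also have "d0 x x2 \<rho>' e + Y e = \<psi> e" unfolding Y_def by (rule madd6[OF d0rho'c psi(1)])
    also have "f (dt e) * \<psi> e = X e" by (rule psi(2))
    also have "d0 x x \<tau>' e + X e = \<phi> e" unfolding X_def by (rule madd6[OF d0tau'c phie])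
    finally show ?thesis .
  qed
  then show "\<exists>\<sigma>. C0 x x \<sigma> \<and> d0 x x \<sigma> = \<phi>" using sc by blast
qed


lemma claimB:
  assumes ses: "pi_ses src tgt x2 x x1 f g"
    and h22: "H1z x2 x2" and hx1: "H1z x x1" and h1x: "H1z x1 x"
  shows "H1z x1 x1"
  unfolding H1z_def
proof (intro allI impI)
  fix \<phi> assume Zphi: "Zc x1 x1 \<phi>"
  note p = ses_parts[OF ses]
  note rx2 = p(6) and rx = p(7) and rx1 = p(8) and fhom = p(4) and ghom = p(5)
  note fc = p(9) and gc = p(10)
  obtain t where t: "C0 x1 x t" "\<And>i. g i * t i = 1\<^sub>m (dimv x1 i)" using ses_t[OF ses] by blast
  note tc = C0D[OF t(1)]
  obtain R where R: "\<And>i. R i \<in> carrier_mat (dimv x2 i) (dimv x i)" "\<And>i. R i * f i = 1\<^sub>m (dimv x2 i)"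
    using ses_R[OF ses t] by blast
  have phic: "C1 x1 x1 \<phi>" using Zphi unfolding Zc_def by simp
  note phie = C1D(1)[OF phic]
  note gf = ses_gf[OF ses]
  have "Zc x x1 (\<lambda>e. \<phi> e * g (ds e))" by (rule Zc_comp_right[OF rx1 rx1 rx Zphi ghom])
  then obtain \<tau> where tau: "C0 x x1 \<tau>" "d0 x x1 \<tau> = (\<lambda>e. \<phi> e * g (ds e))"
    using hx1 unfolding H1z_def by blast
  note tauc = C0D[OF tau(1)]
  define \<alpha> where "\<alpha> i = \<tau> i * f i" for i
  have alc: "C0 x2 x1 \<alpha>" unfolding \<alpha>_def C0_def using tauc fc by (metis mult_carrier_mat)
  have d0al: "d0 x2 x1 \<alpha> e = 0\<^sub>m (dimv x1 (dt e)) (dimv x2 (ds e))" for e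
  proof -
    have "d0 x2 x1 \<alpha> e = d0 x x1 \<tau> e * f (ds e)" unfolding \<alpha>_def by (rule d0_comp_right[OF rx rx1 rx2 tau(1) fhom])
    also have "\<dots> = \<phi> e * (g (ds e) * f (ds e))" unfolding tau(2) by (rule assoc_mult_mat[OF phie gc fc])
    also have "\<dots> = 0\<^sub>m (dimv x1 (dt e)) (dimv x2 (ds e))" unfolding gf by (rule right_mult_zero_mat[OF phie])
    finally show ?thesis .
  qed
  define \<beta>' where "\<beta>' i = t i * \<alpha> i" for i
  have be'c: "C0 x2 x \<beta>'" unfolding \<beta>'_def by (rule C0_comp[OF alc t(1)])
  note d0be'c = C1D(1)[OF d0_C1[OF rx2 rx be'c]]
  have gbe': "g i * \<beta>' i = \<alpha> i" for i
  proof -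
    have "g i * \<beta>' i = (g i * t i) * \<alpha> i" unfolding \<beta>'_def using assoc_mult_mat[OF gc tc C0D[OF alc]] by simp
    also have "\<dots> = \<alpha> i" using t(2) left_mult_one_mat[OF C0D[OF alc]] by simp
    finally show ?thesis .
  qed
  have "g (dt e) * d0 x2 x \<beta>' e = 0\<^sub>m (dimv x1 (dt e)) (dimv x2 (ds e))" for e
    using d0_comp_left[OF rx2 rx rx1 be'c ghom, of e] gbe' d0al[of e] by simp
  then have "\<exists>Y\<in>carrier_mat (dimv x2 (dt e)) (dimv x2 (ds e)). f (dt e) * Y = d0 x2 x \<beta>' e" for e
    by (rule ses_lift[OF ses d0be'c])
  then obtain \<gamma> where ga: "\<And>e. \<gamma> e \<in> carrier_mat (dimv x2 (dt e)) (dimv x2 (ds e))"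
    "\<And>e. f (dt e) * \<gamma> e = d0 x2 x \<beta>' e" by metis
  have gac: "C1 x2 x2 \<gamma>" unfolding C1_def using ga(1) by blast
  have "Zc x2 x (\<lambda>e. f (dt e) * \<gamma> e)" unfolding ga(2) by (rule Zc_d0[OF p(1) p(2) be'c])
  then have "Zc x2 x2 \<gamma>" by (rule Zc_cancel_f[OF ses rx2 gac])
  then obtain \<kappa> where ka: "C0 x2 x2 \<kappa>" "d0 x2 x2 \<kappa> = \<gamma>" using h22 unfolding H1z_def by blast
  define \<beta> where "\<beta> i = \<beta>' i - f i * \<kappa> i" for i
  have fka: "C0 x2 x (\<lambda>i. f i * \<kappa> i)" by (rule C0_comp[OF ka(1) homD(1)[OF fhom]])
  have bec: "C0 x2 x \<beta>" unfolding \<beta>_def by (rule C0_minus[OF be'c fka])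
  have d0be: "d0 x2 x \<beta> e = 0\<^sub>m (dimv x (dt e)) (dimv x2 (ds e))" for e
  proof -
    have "d0 x2 x \<beta> e = d0 x2 x \<beta>' e - d0 x2 x (\<lambda>i. f i * \<kappa> i) e"
      unfolding \<beta>_def by (rule d0_minus[OF rx2 rx be'c fka])
    also have "d0 x2 x (\<lambda>i. f i * \<kappa> i) e = f (dt e) * d0 x2 x2 \<kappa> e"
      by (rule d0_comp_left[OF rx2 rx2 rx ka(1) fhom])
    also have "\<dots> = d0 x2 x \<beta>' e" using ka(2) ga(2) by simp
    finally show ?thesis using d0be'c by simp
  qed
  have behom: "pi_hom src tgt x2 x \<beta>" using hom_iff[OF rx2 rx] bec d0be by blast
  have gbe: "g i * \<beta> i = \<alpha> i" for i
  proof -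
    have "g i * \<beta> i = g i * \<beta>' i - g i * (f i * \<kappa> i)"
      unfolding \<beta>_def by (rule mult_minus_distrib_mat[OF gc C0D[OF be'c] C0D[OF fka]])
    also have "g i * (f i * \<kappa> i) = (g i * f i) * \<kappa> i" using assoc_mult_mat[OF gc fc C0D[OF ka(1)]] by simp
    also have "\<dots> = 0\<^sub>m (dimv x1 i) (dimv x2 i)" unfolding gf by (rule left_mult_zero_mat[OF C0D[OF ka(1)]])
    finally show ?thesis using gbe' madd7[OF C0D[OF alc]] by simp
  qed
  define \<delta>' where "\<delta>' i = \<beta> i * R i" for i
  have de'c: "C0 x x \<delta>'" unfolding \<delta>'_def C0_def using C0D[OF bec] R(1) by (metis mult_carrier_mat)
  note d0de'c = C1D(1)[OF d0_C1[OF rx rx de'c]]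
  have de'f: "\<delta>' i * f i = \<beta> i" for i
    unfolding \<delta>'_def using assoc_mult_mat[OF C0D[OF bec] R(1) fc] R(2) right_mult_one_mat[OF C0D[OF bec]] by simp
  have d0de'f: "d0 x x \<delta>' e * f (ds e) = 0\<^sub>m (dimv x (dt e)) (dimv x2 (ds e))" for e
    using d0_comp_right[OF rx rx rx2 de'c fhom, of e] de'f d0be[of e] by simp
  define \<nu> where "\<nu> e = d0 x x \<delta>' e * t (ds e)" for e
  have nuc: "C1 x1 x \<nu>" unfolding C1_def \<nu>_def using d0de'c tc by (metis mult_carrier_mat)
  have nug: "d0 x x \<delta>' e = \<nu> e * g (ds e)" for e
    unfolding \<nu>_def by (rule ses_factor_f[OF ses t d0de'c d0de'f])
  have "Zc x x (\<lambda>e. \<nu> e * g (ds e))" using Zc_d0[OF p(2) p(2) de'c] nug by (metis (no_types, lifting) ext)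
  then have "Zc x1 x \<nu>" by (rule Zc_cancel_g[OF ses t rx nuc])
  then obtain \<eta> where la: "C0 x1 x \<eta>" "d0 x1 x \<eta> = \<nu>" using h1x unfolding H1z_def by blast
  define \<delta> where "\<delta> i = \<delta>' i - \<eta> i * g i" for i
  have lag: "C0 x x (\<lambda>i. \<eta> i * g i)" unfolding C0_def using C0D[OF la(1)] gc by (metis mult_carrier_mat)
  have dec: "C0 x x \<delta>" unfolding \<delta>_def by (rule C0_minus[OF de'c lag])
  have d0de: "d0 x x \<delta> e = 0\<^sub>m (dimv x (dt e)) (dimv x (ds e))" for e
  proof -
    have "d0 x x \<delta> e = d0 x x \<delta>' e - d0 x x (\<lambda>i. \<eta> i * g i) e"
      unfolding \<delta>_def by (rule d0_minus[OF rx rx de'c lag])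
    also have "d0 x x (\<lambda>i. \<eta> i * g i) e = d0 x1 x \<eta> e * g (ds e)"
      by (rule d0_comp_right[OF rx1 rx rx la(1) ghom])
    also have "\<dots> = d0 x x \<delta>' e" using la(2) nug by simp
    finally show ?thesis using d0de'c by simp
  qed
  have def: "\<delta> i * f i = \<beta> i" for i
  proof -
    have "\<delta> i * f i = \<delta>' i * f i - (\<eta> i * g i) * f i"
      unfolding \<delta>_def by (rule minus_mult_distrib_mat[OF C0D[OF de'c] C0D[OF lag] fc])
    also have "(\<eta> i * g i) * f i = \<eta> i * (g i * f i)" by (rule assoc_mult_mat[OF C0D[OF la(1)] gc fc])
    also have "\<dots> = 0\<^sub>m (dimv x i) (dimv x2 i)" unfolding gf by (rule right_mult_zero_mat[OF C0D[OF la(1)]])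
    finally show ?thesis using de'f madd7[OF C0D[OF bec]] by simp
  qed
  define \<psi> where "\<psi> i = g i * \<delta> i" for i
  have psc: "C0 x x1 \<psi>" unfolding \<psi>_def by (rule C0_comp[OF dec homD(1)[OF ghom]])
  have d0ps: "d0 x x1 \<psi> e = 0\<^sub>m (dimv x1 (dt e)) (dimv x (ds e))" for e
    using d0_comp_left[OF rx rx rx1 dec ghom, of e] d0de[of e] right_mult_zero_mat[OF gc] unfolding \<psi>_def by simp
  have psf: "\<psi> i * f i = \<tau> i * f i" for i
    unfolding \<psi>_def using assoc_mult_mat[OF gc C0D[OF dec] fc] def gbe \<alpha>_def by simp
  define \<omega> where "\<omega> i = (\<tau> i - \<psi> i) * t i" for i
  have omc: "C0 x1 x1 \<omega>" unfolding \<omega>_def C0_def using C0D[OF C0_minus[OF tau(1) psc]] tc by (metis mult_carrier_mat)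
  have tps: "\<tau> i - \<psi> i = \<omega> i * g i" for i
  proof -
    have "(\<tau> i - \<psi> i) * f i = 0\<^sub>m (dimv x1 i) (dimv x2 i)"
      using minus_mult_distrib_mat[OF tauc C0D[OF psc] fc] psf mult_carrier_mat[OF tauc fc] by simp
    then show ?thesis unfolding \<omega>_def by (rule ses_factor_f[OF ses t C0D[OF C0_minus[OF tau(1) psc]]])
  qed
  have "d0 x1 x1 \<omega> = \<phi>"
  proof (rule ext)
    fix e
    note d0omc = C1D(1)[OF d0_C1[OF rx1 rx1 omc], of e]
    have "d0 x x1 (\<lambda>i. \<tau> i - \<psi> i) e = d0 x x1 \<tau> e - d0 x x1 \<psi> e" by (rule d0_minus[OF rx rx1 tau(1) psc])
    also have "\<dots> = \<phi> e * g (ds e)" using tau(2) d0ps madd7[OF mult_carrier_mat[OF phie gc]] by simp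
    finally have 1: "d0 x x1 (\<lambda>i. \<tau> i - \<psi> i) e = \<phi> e * g (ds e)" .
    have "d0 x x1 (\<lambda>i. \<tau> i - \<psi> i) e = d0 x x1 (\<lambda>i. \<omega> i * g i) e" using tps by simp
    also have "\<dots> = d0 x1 x1 \<omega> e * g (ds e)" by (rule d0_comp_right[OF rx1 rx1 rx omc ghom])
    finally have "(\<phi> e - d0 x1 x1 \<omega> e) * g (ds e) = 0\<^sub>m (dimv x1 (dt e)) (dimv x (ds e))"
      using 1 minus_mult_distrib_mat[OF phie d0omc gc] minus_r_inv_mat[OF mult_carrier_mat[OF d0omc gc]] by simp
    then have "\<phi> e - d0 x1 x1 \<omega> e = 0\<^sub>m (dimv x1 (dt e)) (dimv x1 (ds e))"
      by (rule ses_cancel_g[OF ses t minus_carrier_mat[OF d0omc]])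
    then show "d0 x1 x1 \<omega> e = \<phi> e" using mat_minus_eq0[OF phie d0omc] by simp
  qed
  then show "\<exists>\<sigma>. C0 x1 x1 \<sigma> \<and> d0 x1 x1 \<sigma> = \<phi>" using omc by blast
qed

end

context Q begin

lemma H1z_ext1: assumes M: "pi_module src tgt M" and N: "pi_module src tgt N" and H: "H1z M N"
  shows "ext1_zero src tgt M N"
  unfolding ext1_zero_def
proof (intro allI impI)
  fix E f g assume ses: "pi_ses src tgt N E M f g"
  note p = ses_parts[OF ses]
  note rN = p(6) and rE = p(7) and rM = p(8) and fhom = p(4) and ghom = p(5)
  note fc = p(9) and gc = p(10)
  obtain t where t: "C0 M E t" "\<And>i. g i * t i = 1\<^sub>m (dimv M i)" using ses_t[OF ses] by blast
  note tc = C0D[OF t(1)]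
  note d0tc = C1D(1)[OF d0_C1[OF rM rE t(1)]]
  have gd0: "g (dt e) * d0 M E t e = 0\<^sub>m (dimv M (dt e)) (dimv M (ds e))" for e
  proof -
    have "g (dt e) * d0 M E t e = d0 M M (\<lambda>i. g i * t i) e"
      by (rule d0_comp_left[OF rM rE rM t(1) ghom, symmetric])
    also have "(\<lambda>i. g i * t i) = (\<lambda>i. 1\<^sub>m (dimv M i))" using t(2) by simp
    also have "d0 M M (\<lambda>i. 1\<^sub>m (dimv M i)) e = 0\<^sub>m (dimv M (dt e)) (dimv M (ds e))"
      unfolding d0_def using repD(3)[OF rM, of e] by simp
    finally show ?thesis .
  qed
  have "\<exists>Y\<in>carrier_mat (dimv N (dt e)) (dimv M (ds e)). f (dt e) * Y = d0 M E t e" for e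
    by (rule ses_lift[OF ses d0tc gd0])
  then obtain \<phi> where phi: "\<And>e. \<phi> e \<in> carrier_mat (dimv N (dt e)) (dimv M (ds e))"
    "\<And>e. f (dt e) * \<phi> e = d0 M E t e" by metis
  have phic: "C1 M N \<phi>" unfolding C1_def using phi(1) by blast
  have "Zc M E (\<lambda>e. f (dt e) * \<phi> e)" unfolding phi(2) by (rule Zc_d0[OF M p(2) t(1)])
  then have "Zc M N \<phi>" by (rule Zc_cancel_f[OF ses rM phic])
  then obtain \<sigma> where s: "C0 M N \<sigma>" "d0 M N \<sigma> = \<phi>" using H unfolding H1z_def by blast
  define s where "s i = t i - f i * \<sigma> i" for i
  have fs: "C0 M E (\<lambda>i. f i * \<sigma> i)" by (rule C0_comp[OF s(1) homD(1)[OF fhom]])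
  have sc: "C0 M E s" unfolding s_def by (rule C0_minus[OF t(1) fs])
  have "d0 M E s e = 0\<^sub>m (dimv E (dt e)) (dimv M (ds e))" for e
  proof -
    have "d0 M E s e = d0 M E t e - d0 M E (\<lambda>i. f i * \<sigma> i) e"
      unfolding s_def by (rule d0_minus[OF rM rE t(1) fs])
    also have "d0 M E (\<lambda>i. f i * \<sigma> i) e = f (dt e) * d0 M N \<sigma> e"
      by (rule d0_comp_left[OF rM rN rE s(1) fhom])
    also have "\<dots> = d0 M E t e" using s(2) phi(2) by simp
    finally show ?thesis using d0tc by simp
  qed
  then have "pi_hom src tgt M E s" using hom_iff[OF rM rE] sc by blast
  moreover have "g i * s i = 1\<^sub>m (dimv M i)" for i
  proof -
    have "g i * s i = g i * t i - g i * (f i * \<sigma> i)"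
      unfolding s_def by (rule mult_minus_distrib_mat[OF gc tc C0D[OF fs]])
    also have "g i * (f i * \<sigma> i) = (g i * f i) * \<sigma> i" using assoc_mult_mat[OF gc fc C0D[OF s(1)]] by simp
    also have "\<dots> = 0\<^sub>m (dimv M i) (dimv M i)" unfolding ses_gf[OF ses] by (rule left_mult_zero_mat[OF C0D[OF s(1)]])
    finally show ?thesis using t(2) madd7[OF one_carrier_mat] by simp
  qed
  ultimately show "\<exists>s. pi_hom src tgt M E s \<and> (\<forall>i. g i * s i = 1\<^sub>m (dimv M i))" by blast
qed

end

definition incl :: "nat \<Rightarrow> nat \<Rightarrow> 'k::field mat" where
  "incl n m = mat (n + m) n (\<lambda>(r,c). if r = c then 1 else 0)"
definition pr1 :: "nat \<Rightarrow> nat \<Rightarrow> 'k::field mat" where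
  "pr1 n m = mat n (n + m) (\<lambda>(r,c). if r = c then 1 else 0)"
definition pr2 :: "nat \<Rightarrow> nat \<Rightarrow> 'k::field mat" where
  "pr2 n m = mat m (n + m) (\<lambda>(r,c). if c = r + n then 1 else 0)"
definition blk :: "'k::field mat \<Rightarrow> 'k mat \<Rightarrow> 'k mat \<Rightarrow> 'k mat" where
  "blk A B D = four_block_mat A B (0\<^sub>m (dim_row D) (dim_col A)) D"

lemma incl_carrier[simp]: "incl n m \<in> carrier_mat (n + m) n"
  and pr1_carrier[simp]: "pr1 n m \<in> carrier_mat n (n + m)"
  and pr2_carrier[simp]: "pr2 n m \<in> carrier_mat m (n + m)"
  by (auto simp: incl_def pr1_def pr2_def)

lemma blk_carrier: assumes "A \<in> carrier_mat n1 n2" "D \<in> carrier_mat m1 m2"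
  shows "blk A B D \<in> carrier_mat (n1 + m1) (n2 + m2)"
  using carrier_matD[OF assms(1)] carrier_matD[OF assms(2)] unfolding blk_def carrier_mat_def by simp

lemma index_blk: assumes "A \<in> carrier_mat n1 n2" "B \<in> carrier_mat n1 m2" "D \<in> carrier_mat m1 m2"
  "r < n1 + m1" "c < n2 + m2"
  shows "blk A B D $$ (r,c) = (if r < n1 then if c < n2 then A $$ (r,c) else B $$ (r, c - n2)
     else if c < n2 then 0 else D $$ (r - n1, c - n2))"
  using carrier_matD[OF assms(1)] carrier_matD[OF assms(3)] assms(4,5) unfolding blk_def by simp

lemma sum_delta0: "(\<Sum>k<n. if k = c then (x::nat\<Rightarrow>'k::field) k else 0) = (if c < n then x c else 0)"
proof -
  have "(\<Sum>k<n. if k = c then (x::nat\<Rightarrow>'k::field) k else 0) = (if c \<in> {..<n} then x c else 0)"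
    by (rule sum.delta) simp
  then show ?thesis by simp
qed

lemma sum_delta1: "(\<Sum>k<n. (x::nat\<Rightarrow>'k::field) k * (if k = c then 1 else 0)) = (if c < n then x c else (0::'k::field))"
proof -
  have "(\<Sum>k<n. x k * (if k = c then 1 else 0)) = (\<Sum>k<n. if k = c then x k else 0)"
    by (rule sum.cong) auto
  then show ?thesis by (simp only: sum_delta0)
qed

lemma sum_delta2: "(\<Sum>k<n. (if r = k then 1 else 0) * (x::nat\<Rightarrow>'k::field) k) = (if r < n then x r else (0::'k::field))"
proof -
  have "(\<Sum>k<n. (if r = k then 1 else 0) * x k) = (\<Sum>k<n. if k = r then x k else 0)"
    by (rule sum.cong) auto
  then show ?thesis by (simp only: sum_delta0)
qed

lemma sum_delta4: "(\<Sum>k<N. (if k = r + n then 1 else 0) * (x::nat\<Rightarrow>'k::field) k) = (if r + n < N then x (r + n) else (0::'k::field))"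
proof -
  have "(\<Sum>k<N. (if k = r + n then 1 else 0) * x k) = (\<Sum>k<N. if k = r + n then x k else 0)"
    by (rule sum.cong) auto
  then show ?thesis by (simp only: sum_delta0)
qed

lemma sum_delta3: "(\<Sum>k<m. (x::nat\<Rightarrow>'k::field) k * (if c = k + n then 1 else 0)) = (if n \<le> c \<and> c < n + m then x (c - n) else (0::'k::field))"
proof (cases "n \<le> c")
  case True
  have "(\<Sum>k<m. x k * (if c = k + n then 1 else 0)) = (\<Sum>k<m. if k = c - n then x k else 0)"
    by (rule sum.cong) (use True in auto)
  then show ?thesis using True by (simp only: sum_delta0) auto
next
  case False
  have "(\<Sum>k<m. x k * (if c = k + n then 1 else 0)) = (\<Sum>k<m. 0)"
    by (rule sum.cong) (use False in auto)
  then show ?thesis using False by simp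
qed

lemma blk_incl: assumes A: "A \<in> carrier_mat n1 n2" and B: "B \<in> carrier_mat n1 m2" and D: "D \<in> carrier_mat m1 m2"
  shows "blk A B D * incl n2 m2 = incl n1 m1 * A"
proof (rule eq_matI)
  fix r c assume "r < dim_row (incl n1 m1 * A)" "c < dim_col (incl n1 m1 * A)"
  then have rc: "r < n1 + m1" "c < n2" by (simp_all only: index_mult_mat(2,3) carrier_matD[OF incl_carrier] carrier_matD[OF A])
  have "(blk A B D * incl n2 m2) $$ (r,c) = (\<Sum>k<n2+m2. blk A B D $$ (r,k) * (if k = c then 1 else 0))"
    by (subst idx_mult[OF blk_carrier[OF A D] incl_carrier rc]) (rule sum.cong, simp, use rc in \<open>simp add: incl_def\<close>)
  also have "\<dots> = blk A B D $$ (r,c)" using rc by (simp only: sum_delta1) simp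
  also have "\<dots> = (if r < n1 then A $$ (r,c) else 0)" using rc index_blk[OF A B D rc(1)] by simp
  also have "\<dots> = (\<Sum>k<n1. (if r = k then 1 else 0) * A $$ (k,c))" by (simp only: sum_delta2)
  also have "\<dots> = (incl n1 m1 * A) $$ (r,c)"
    by (subst idx_mult[OF incl_carrier A rc]) (rule sum.cong, simp, use rc in \<open>simp add: incl_def\<close>)
  finally show "(blk A B D * incl n2 m2) $$ (r,c) = (incl n1 m1 * A) $$ (r,c)" .
qed (simp_all only: index_mult_mat(2,3) carrier_matD[OF blk_carrier[OF A D]] carrier_matD[OF incl_carrier] carrier_matD[OF A])


lemma pr2_blk: assumes A: "A \<in> carrier_mat n1 n2" and B: "B \<in> carrier_mat n1 m2" and D: "D \<in> carrier_mat m1 m2"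
  shows "pr2 n1 m1 * blk A B D = D * pr2 n2 m2"
proof (rule eq_matI)
  fix r c assume "r < dim_row (D * pr2 n2 m2)" "c < dim_col (D * pr2 n2 m2)"
  then have rc: "r < m1" "c < n2 + m2" by (simp_all only: index_mult_mat(2,3) carrier_matD[OF pr2_carrier] carrier_matD[OF D])
  have "(pr2 n1 m1 * blk A B D) $$ (r,c) = (\<Sum>k<n1+m1. (if k = r + n1 then 1 else 0) * blk A B D $$ (k,c))"
    by (subst idx_mult[OF pr2_carrier blk_carrier[OF A D] rc]) (rule sum.cong, simp, use rc in \<open>auto simp: pr2_def\<close>)
  also have "\<dots> = blk A B D $$ (r + n1, c)" using rc by (simp only: sum_delta4) simp
  also have "\<dots> = (if n2 \<le> c \<and> c < n2 + m2 then D $$ (r, c - n2) else 0)" using rc index_blk[OF A B D _ rc(2), of "r + n1"] by simp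
  also have "\<dots> = (\<Sum>k<m2. D $$ (r,k) * (if c = k + n2 then 1 else 0))" by (simp only: sum_delta3)
  also have "\<dots> = (D * pr2 n2 m2) $$ (r,c)"
    by (subst idx_mult[OF D pr2_carrier rc]) (rule sum.cong, simp, use rc in \<open>simp add: pr2_def\<close>)
  finally show "(pr2 n1 m1 * blk A B D) $$ (r,c) = (D * pr2 n2 m2) $$ (r,c)" .
qed (simp_all only: index_mult_mat(2,3) carrier_matD[OF blk_carrier[OF A D]] carrier_matD[OF pr2_carrier] carrier_matD[OF D])

lemma pr1_blk: assumes A: "A \<in> carrier_mat n1 n2" and B: "B \<in> carrier_mat n1 m2" and D: "D \<in> carrier_mat m1 m2"
  shows "pr1 n1 m1 * blk A B D = A * pr1 n2 m2 + B * pr2 n2 m2"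
proof (rule eq_matI)
  fix r c assume "r < dim_row (A * pr1 n2 m2 + B * pr2 n2 m2)" "c < dim_col (A * pr1 n2 m2 + B * pr2 n2 m2)"
  then have rc: "r < n1" "c < n2 + m2"
    by (simp_all only: index_add_mat(2,3) index_mult_mat(2,3) carrier_matD[OF pr2_carrier] carrier_matD[OF B])
  have rc': "r < n1 + m1" using rc by simp
  have "(pr1 n1 m1 * blk A B D) $$ (r,c) = (\<Sum>k<n1+m1. (if r = k then 1 else 0) * blk A B D $$ (k,c))"
    by (subst idx_mult[OF pr1_carrier blk_carrier[OF A D] rc(1) rc(2)]) (rule sum.cong, simp, use rc in \<open>auto simp: pr1_def\<close>)
  also have "\<dots> = blk A B D $$ (r, c)" using rc by (simp only: sum_delta2) simp
  also have "\<dots> = (if c < n2 then A $$ (r, c) else 0) + (if n2 \<le> c \<and> c < n2 + m2 then B $$ (r, c - n2) else 0)"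
    using rc index_blk[OF A B D rc' rc(2)] by simp
  also have "\<dots> = (\<Sum>k<n2. A $$ (r,k) * (if k = c then 1 else 0)) + (\<Sum>k<m2. B $$ (r,k) * (if c = k + n2 then 1 else 0))"
    by (simp only: sum_delta1 sum_delta3)
  also have "\<dots> = (A * pr1 n2 m2) $$ (r,c) + (B * pr2 n2 m2) $$ (r,c)"
    by (subst idx_mult[OF A pr1_carrier rc], subst idx_mult[OF B pr2_carrier rc])
      (intro arg_cong2[where f = plus]; rule sum.cong, simp, use rc in \<open>simp add: pr1_def pr2_def\<close>)
  also have "\<dots> = (A * pr1 n2 m2 + B * pr2 n2 m2) $$ (r,c)"
    by (rule index_add_mat(1)[symmetric]) (simp_all only: index_mult_mat(2,3) carrier_matD[OF B] carrier_matD[OF pr2_carrier] rc)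
  finally show "(pr1 n1 m1 * blk A B D) $$ (r,c) = (A * pr1 n2 m2 + B * pr2 n2 m2) $$ (r,c)" .
qed (simp_all only: index_add_mat(2,3) index_mult_mat(2,3) carrier_matD[OF blk_carrier[OF A D]] carrier_matD[OF pr1_carrier]
  carrier_matD[OF pr2_carrier] carrier_matD[OF A] carrier_matD[OF B])

lemma incl_vec: "u \<in> carrier_vec n \<Longrightarrow> incl n m *\<^sub>v u = vec (n + m) (\<lambda>r. if r < n then u $ r else (0::'k::field))"
proof (rule eq_vecI)
  fix r assume u: "u \<in> carrier_vec n" and "r < dim_vec (vec (n + m) (\<lambda>r. if r < n then u $ r else (0::'k)))"
  then have r: "r < n + m" by simp
  have "(incl n m *\<^sub>v u) $ r = (\<Sum>k<n. (if r = k then 1 else 0) * u $ k)"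
    using r u by (simp add: incl_def scalar_prod_def atLeast0LessThan row_def)
  also have "\<dots> = (if r < n then u $ r else 0)" by (simp only: sum_delta2)
  finally show "(incl n m *\<^sub>v u) $ r = vec (n + m) (\<lambda>r. if r < n then u $ r else 0) $ r" using r by simp
qed (simp add: incl_def)

lemma pr2_vec: "v \<in> carrier_vec (n + m) \<Longrightarrow> pr2 n m *\<^sub>v v = vec m (\<lambda>r. v $ (r + n) :: 'k::field)"
proof (rule eq_vecI)
  fix r assume v: "v \<in> carrier_vec (n + m)" and "r < dim_vec (vec m (\<lambda>r. v $ (r + n) :: 'k))"
  then have r: "r < m" by simp
  have "(pr2 n m *\<^sub>v v) $ r = (\<Sum>k<n+m. (if k = r + n then 1 else 0) * v $ k)"
    using r v by (simp add: pr2_def scalar_prod_def atLeast0LessThan row_def)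
  also have "\<dots> = v $ (r + n)" using r by (simp only: sum_delta4) simp
  finally show "(pr2 n m *\<^sub>v v) $ r = vec m (\<lambda>r. v $ (r + n)) $ r" using r by simp
qed (simp add: pr2_def)


lemma blk_mult: fixes A1 :: "'k::field mat"
  assumes A1: "A1 \<in> carrier_mat n1 n2" and B1: "B1 \<in> carrier_mat n1 m2" and D1: "D1 \<in> carrier_mat m1 m2"
    and A2: "A2 \<in> carrier_mat n2 n3" and B2: "B2 \<in> carrier_mat n2 m3" and D2: "D2 \<in> carrier_mat m2 m3"
  shows "blk A1 B1 D1 * blk A2 B2 D2 = blk (A1 * A2) (A1 * B2 + B1 * D2) (D1 * D2)"
proof -
  have e1: "blk A1 B1 D1 = four_block_mat A1 B1 (0\<^sub>m m1 n2) D1"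
    unfolding blk_def using carrier_matD[OF D1] carrier_matD[OF A1] by simp
  have e2: "blk A2 B2 D2 = four_block_mat A2 B2 (0\<^sub>m m2 n3) D2"
    unfolding blk_def using carrier_matD[OF D2] carrier_matD[OF A2] by simp
  have e3: "blk (A1 * A2) (A1 * B2 + B1 * D2) (D1 * D2) = four_block_mat (A1 * A2) (A1 * B2 + B1 * D2) (0\<^sub>m m1 n3) (D1 * D2)"
    unfolding blk_def using carrier_matD[OF D1] carrier_matD[OF A2] by simp
  have z1: "A1 * A2 + B1 * 0\<^sub>m m2 n3 = A1 * A2"
    unfolding right_mult_zero_mat[OF B1] by (rule right_add_zero_mat[OF mult_carrier_mat[OF A1 A2]])
  have z2: "0\<^sub>m m1 n2 * A2 + D1 * 0\<^sub>m m2 n3 = 0\<^sub>m m1 n3"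
    unfolding left_mult_zero_mat[OF A2] right_mult_zero_mat[OF D1] by (rule left_add_zero_mat[OF zero_carrier_mat])
  have z3: "0\<^sub>m m1 n2 * B2 + D1 * D2 = D1 * D2"
    unfolding left_mult_zero_mat[OF B2] by (rule left_add_zero_mat[OF mult_carrier_mat[OF D1 D2]])
  show ?thesis unfolding e1 e2 e3 mult_four_block_mat[OF A1 B1 zero_carrier_mat D1 A2 B2 zero_carrier_mat D2] z1 z2 z3 ..
qed

lemma msum_blk: fixes A :: "'h \<Rightarrow> 'k::field mat"
  assumes A: "\<And>h. h \<in> S \<Longrightarrow> A h \<in> carrier_mat n1 n2" and B: "\<And>h. h \<in> S \<Longrightarrow> B h \<in> carrier_mat n1 m2"
    and D: "\<And>h. h \<in> S \<Longrightarrow> D h \<in> carrier_mat m1 m2"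
  shows "msum (n1 + m1) (n2 + m2) S (\<lambda>h. blk (A h) (B h) (D h)) = blk (msum n1 n2 S A) (msum n1 m2 S B) (msum m1 m2 S D)"
proof (rule eq_matI)
  fix r c assume "r < dim_row (blk (msum n1 n2 S A) (msum n1 m2 S B) (msum m1 m2 S D))"
    "c < dim_col (blk (msum n1 n2 S A) (msum n1 m2 S B) (msum m1 m2 S D))"
  then have rc: "r < n1 + m1" "c < n2 + m2"
    by (simp_all add: carrier_matD[OF blk_carrier[OF msum_carrier msum_carrier]])
  have "msum (n1 + m1) (n2 + m2) S (\<lambda>h. blk (A h) (B h) (D h)) $$ (r,c) =
     (\<Sum>h\<in>S. if r < n1 then if c < n2 then A h $$ (r,c) else B h $$ (r, c - n2)
       else if c < n2 then 0 else D h $$ (r - n1, c - n2))"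
    unfolding index_msum[OF rc] by (rule sum.cong) (simp_all add: index_blk[OF A B D rc])
  also have "\<dots> = (if r < n1 then if c < n2 then (\<Sum>h\<in>S. A h $$ (r,c)) else (\<Sum>h\<in>S. B h $$ (r, c - n2))
       else if c < n2 then 0 else (\<Sum>h\<in>S. D h $$ (r - n1, c - n2)))"
    by simp
  also have "\<dots> = blk (msum n1 n2 S A) (msum n1 m2 S B) (msum m1 m2 S D) $$ (r,c)"
    using rc by (simp add: index_blk[OF msum_carrier msum_carrier msum_carrier rc])
  finally show "msum (n1 + m1) (n2 + m2) S (\<lambda>h. blk (A h) (B h) (D h)) $$ (r,c) =
     blk (msum n1 n2 S A) (msum n1 m2 S B) (msum m1 m2 S D) $$ (r,c)" .
qed (simp_all add: carrier_matD[OF blk_carrier[OF msum_carrier msum_carrier]])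

lemma blk_minus: fixes A :: "'k::field mat"
  assumes A: "A \<in> carrier_mat n1 n2" and B: "B \<in> carrier_mat n1 m2" and D: "D \<in> carrier_mat m1 m2"
    and A': "A' \<in> carrier_mat n1 n2" and B': "B' \<in> carrier_mat n1 m2" and D': "D' \<in> carrier_mat m1 m2"
  shows "blk A B D - blk A' B' D' = blk (A - A') (B - B') (D - D')"
proof (rule eq_matI)
  have c: "blk (A - A') (B - B') (D - D') \<in> carrier_mat (n1 + m1) (n2 + m2)"
    by (rule blk_carrier[OF minus_carrier_mat[OF A'] minus_carrier_mat[OF D']])
  fix r c assume "r < dim_row (blk (A - A') (B - B') (D - D'))" "c < dim_col (blk (A - A') (B - B') (D - D'))"
  then have rc: "r < n1 + m1" "c < n2 + m2" using carrier_matD[OF c] by simp_all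
  show "(blk A B D - blk A' B' D') $$ (r,c) = blk (A - A') (B - B') (D - D') $$ (r,c)"
    using rc carrier_matD[OF blk_carrier[OF A' D']]
    by (simp add: index_blk[OF A B D rc] index_blk[OF A' B' D' rc]
      index_blk[OF minus_carrier_mat[OF A'] minus_carrier_mat[OF B'] minus_carrier_mat[OF D'] rc]
      carrier_matD[OF A'] carrier_matD[OF B'] carrier_matD[OF D'])
qed (use carrier_matD[OF blk_carrier[OF minus_carrier_mat[OF A'] minus_carrier_mat[OF D']]]
   carrier_matD[OF blk_carrier[OF A' D']] in simp_all)

lemma blk_zero: "blk (0\<^sub>m n1 n2 :: 'k::field mat) (0\<^sub>m n1 m2) (0\<^sub>m m1 m2) = 0\<^sub>m (n1 + m1) (n2 + m2)"
  unfolding blk_def by simp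

lemma madd8: fixes a :: "'k::field mat"
  shows "a \<in> carrier_mat n m \<Longrightarrow> b \<in> carrier_mat n m \<Longrightarrow> c \<in> carrier_mat n m \<Longrightarrow> a = b + c \<Longrightarrow> a - b = c"
  by (intro eq_matI) auto

context Q begin

lemma ext1_H1z: fixes M N :: "('i,'a,'k::field) pirep" assumes M: "pi_module src tgt M" and N: "pi_module src tgt N" and ext: "ext1_zero src tgt M N"
  shows "H1z M N"
  unfolding H1z_def
proof (intro allI impI)
  fix \<phi> assume Z: "Zc M N \<phi>"
  have rM: "rep M" and rN: "rep N" and relM: "\<And>i. relm M i = 0\<^sub>m (dimv M i) (dimv M i)"
    and relN: "\<And>i. relm N i = 0\<^sub>m (dimv N i) (dimv N i)" using M N unfolding pi_module_iff by auto
  have phic: "C1 M N \<phi>" and d1z: "\<And>i. d1 M N \<phi> i = 0\<^sub>m (dimv N i) (dimv M i)" using Z unfolding Zc_def by auto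
  define E :: "('i, 'a, 'k) pirep" where "E = \<lparr>dimv = (\<lambda>i. dimv N i + dimv M i), mp = (\<lambda>e. blk (mp N e) (\<phi> e) (mp M e))\<rparr>"
  have dE[simp]: "dimv E i = dimv N i + dimv M i" for i unfolding E_def by simp
  have mE[simp]: "mp E e = blk (mp N e) (\<phi> e) (mp M e)" for e unfolding E_def by simp
  have rE: "rep E" unfolding rep_def by (simp add: blk_carrier[OF repD(3)[OF rN] repD(3)[OF rM]])
  have prodA: "mp E (h,True) * mp E (h,False) = blk (mp N (h,True) * mp N (h,False))
      (mp N (h,True) * \<phi> (h,False) + \<phi> (h,True) * mp M (h,False)) (mp M (h,True) * mp M (h,False))" for h
    unfolding mE by (rule blk_mult[OF repD(1)[OF rN] C1D(2)[OF phic] repD(1)[OF rM] repD(2)[OF rN] C1D(3)[OF phic] repD(2)[OF rM]])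
  have prodB: "mp E (h,False) * mp E (h,True) = blk (mp N (h,False) * mp N (h,True))
      (mp N (h,False) * \<phi> (h,True) + \<phi> (h,False) * mp M (h,True)) (mp M (h,False) * mp M (h,True))" for h
    unfolding mE by (rule blk_mult[OF repD(2)[OF rN] C1D(3)[OF phic] repD(2)[OF rM] repD(1)[OF rN] C1D(2)[OF phic] repD(1)[OF rM]])
  have relE: "relm E i = blk (relm N i) (d1 M N \<phi> i) (relm M i)" for i
  proof -
    have "relm E i = blk (msum (dimv N i) (dimv N i) {h. tgt h = i} (\<lambda>h. mp N (h,True) * mp N (h,False)))
          (msum (dimv N i) (dimv M i) {h. tgt h = i} (\<lambda>h. mp N (h,True) * \<phi> (h,False) + \<phi> (h,True) * mp M (h,False)))
          (msum (dimv M i) (dimv M i) {h. tgt h = i} (\<lambda>h. mp M (h,True) * mp M (h,False)))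
       - blk (msum (dimv N i) (dimv N i) {h. src h = i} (\<lambda>h. mp N (h,False) * mp N (h,True)))
          (msum (dimv N i) (dimv M i) {h. src h = i} (\<lambda>h. mp N (h,False) * \<phi> (h,True) + \<phi> (h,False) * mp M (h,True)))
          (msum (dimv M i) (dimv M i) {h. src h = i} (\<lambda>h. mp M (h,False) * mp M (h,True)))"
      unfolding relm_def dE prodA prodB
      apply (subst msum_blk)
         apply (use mult_carrier_mat[OF repD(1)[OF rN] repD(2)[OF rN]] in force)
        apply (use termA_carrier[OF rM rN phic] in force)
       apply (use mult_carrier_mat[OF repD(1)[OF rM] repD(2)[OF rM]] in force)
      apply (subst msum_blk)
         apply (use mult_carrier_mat[OF repD(2)[OF rN] repD(1)[OF rN]] in force)
        apply (use termB_carrier[OF rM rN phic] in force)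
       apply (use mult_carrier_mat[OF repD(2)[OF rM] repD(1)[OF rM]] in force)
      ..
    also have "\<dots> = blk (relm N i) (d1 M N \<phi> i) (relm M i)"
      unfolding relm_def d1_def by (rule blk_minus) (rule msum_carrier)+
    finally show ?thesis .
  qed
  have modE: "pi_module src tgt E" unfolding pi_module_iff
    using rE relE relM relN d1z by (simp add: blk_zero)
  define f where "f i = (incl (dimv N i) (dimv M i) :: 'k mat)" for i
  define g where "g i = (pr2 (dimv N i) (dimv M i) :: 'k mat)" for i
  have fhom: "pi_hom src tgt N E f" unfolding pi_hom_def f_def
    using blk_incl[OF repD(3)[OF rN] C1D(1)[OF phic] repD(3)[OF rM]] by simp
  have ghom: "pi_hom src tgt E M g" unfolding pi_hom_def g_def
    using pr2_blk[OF repD(3)[OF rN] C1D(1)[OF phic] repD(3)[OF rM]] by simp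
  have ses: "pi_ses src tgt N E M f g"
    unfolding pi_ses_def
  proof (intro conjI allI ballI impI N modE M fhom ghom)
    fix i and u :: "'k vec" assume u: "u \<in> carrier_vec (dimv N i)" and fu: "f i *\<^sub>v u = 0\<^sub>v (dimv E i)"
    show "u = 0\<^sub>v (dimv N i)"
    proof (rule eq_vecI)
      fix r assume "r < dim_vec (0\<^sub>v (dimv N i) :: 'k vec)"
      then have r: "r < dimv N i" by simp
      have "(f i *\<^sub>v u) $ r = u $ r" unfolding f_def incl_vec[OF u] using r by simp
      then show "u $ r = 0\<^sub>v (dimv N i) $ r" using fu r by simp
    qed (use u in simp)
  next
    fix i and v :: "'k vec" assume v: "v \<in> carrier_vec (dimv E i)"
    then have v': "v \<in> carrier_vec (dimv N i + dimv M i)" by simp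
    show "(g i *\<^sub>v v = 0\<^sub>v (dimv M i)) \<longleftrightarrow> (\<exists>u \<in> carrier_vec (dimv N i). f i *\<^sub>v u = v)"
    proof
      assume gv: "g i *\<^sub>v v = 0\<^sub>v (dimv M i)"
      have vz: "v $ r = 0" if "dimv N i \<le> r" "r < dimv N i + dimv M i" for r
      proof -
        have rr: "r - dimv N i + dimv N i = r" using that by simp
        have "(g i *\<^sub>v v) $ (r - dimv N i) = v $ r" unfolding g_def pr2_vec[OF v'] using that rr by simp
        then show ?thesis using gv that by simp
      qed
      define u where "u = vec (dimv N i) (\<lambda>r. v $ r)"
      have "f i *\<^sub>v u = v" unfolding f_def u_def
        by (subst incl_vec) (use v' vz in \<open>auto intro!: eq_vecI\<close>)
      then show "\<exists>u \<in> carrier_vec (dimv N i). f i *\<^sub>v u = v" unfolding u_def by auto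
    next
      assume "\<exists>u \<in> carrier_vec (dimv N i). f i *\<^sub>v u = v"
      then obtain u where u: "u \<in> carrier_vec (dimv N i)" "f i *\<^sub>v u = v" by blast
      have vv: "v = vec (dimv N i + dimv M i) (\<lambda>r. if r < dimv N i then u $ r else 0)"
        using u(2) unfolding f_def incl_vec[OF u(1)] by simp
      have "g i *\<^sub>v v = vec (dimv M i) (\<lambda>r. v $ (r + dimv N i))" unfolding g_def by (rule pr2_vec[OF v'])
      also have "\<dots> = 0\<^sub>v (dimv M i)" using vv by (intro eq_vecI) auto
      finally show "g i *\<^sub>v v = 0\<^sub>v (dimv M i)" .
    qed
  next
    fix i and w :: "'k vec" assume w: "w \<in> carrier_vec (dimv M i)"
    define v where "v = vec (dimv N i + dimv M i) (\<lambda>r. if r < dimv N i then 0 else w $ (r - dimv N i))"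
    have "g i *\<^sub>v v = w" unfolding g_def v_def by (subst pr2_vec) (use w in \<open>auto intro!: eq_vecI\<close>)
    then show "\<exists>v \<in> carrier_vec (dimv E i). g i *\<^sub>v v = w" unfolding v_def by auto
  qed
  then obtain s where s: "pi_hom src tgt M E s" "\<And>i. g i * s i = 1\<^sub>m (dimv M i)"
    using ext unfolding ext1_zero_def by blast
  have sc: "\<And>i. s i \<in> carrier_mat (dimv N i + dimv M i) (dimv M i)" using C0D[OF homD(1)[OF s(1)]] by simp
  define \<sigma> where "\<sigma> i = pr1 (dimv N i) (dimv M i) * s i" for i
  have sigc: "C0 M N \<sigma>" unfolding C0_def \<sigma>_def using sc by (metis mult_carrier_mat pr1_carrier)
  have "d0 M N \<sigma> e = \<phi> e" for e
  proof -
    note Me = repD(3)[OF rM, of e] and Ne = repD(3)[OF rN, of e] and phie = C1D(1)[OF phic, of e]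
    note P1 = pr1_carrier[of "dimv N (dt e)" "dimv M (dt e)"] and Ee = blk_carrier[OF Ne Me, of "\<phi> e"]
    have hs: "s (dt e) * mp M e = blk (mp N e) (\<phi> e) (mp M e) * s (ds e)" using homD(2)[OF s(1), of e] by simp
    have "\<sigma> (dt e) * mp M e = pr1 (dimv N (dt e)) (dimv M (dt e)) * (s (dt e) * mp M e)"
      unfolding \<sigma>_def by (rule assoc_mult_mat[OF P1 sc Me])
    also have "\<dots> = (pr1 (dimv N (dt e)) (dimv M (dt e)) * blk (mp N e) (\<phi> e) (mp M e)) * s (ds e)"
      unfolding hs by (rule assoc_mult_mat[OF P1 Ee sc, symmetric])
    also have "\<dots> = (mp N e * pr1 (dimv N (ds e)) (dimv M (ds e)) + \<phi> e * pr2 (dimv N (ds e)) (dimv M (ds e))) * s (ds e)"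
      by (simp only: pr1_blk[OF Ne phie Me])
    also have "\<dots> = mp N e * (pr1 (dimv N (ds e)) (dimv M (ds e)) * s (ds e)) + \<phi> e * (pr2 (dimv N (ds e)) (dimv M (ds e)) * s (ds e))"
      by (simp add: add_mult_distrib_mat[OF mult_carrier_mat[OF Ne pr1_carrier] mult_carrier_mat[OF phie pr2_carrier] sc]
          assoc_mult_mat[OF Ne pr1_carrier sc] assoc_mult_mat[OF phie pr2_carrier sc])
    also have "\<dots> = mp N e * \<sigma> (ds e) + \<phi> e"
      using s(2)[of "ds e"] right_mult_one_mat[OF phie] unfolding \<sigma>_def g_def by simp
    finally have "\<sigma> (dt e) * mp M e = mp N e * \<sigma> (ds e) + \<phi> e" .
    then show ?thesis unfolding d0_def
      by (rule madd8[OF mult_carrier_mat[OF C0D[OF sigc] Me] mult_carrier_mat[OF Ne C0D[OF sigc]] phie])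
  qed
  then show "\<exists>\<sigma>. C0 M N \<sigma> \<and> d0 M N \<sigma> = \<phi>" using sigc by blast
qed

end

definition mtr :: "'k::field mat \<Rightarrow> 'k" where
  "mtr A = (\<Sum>i<dim_row A. A $$ (i,i))"

lemma mtr_add: "A \<in> carrier_mat n n \<Longrightarrow> B \<in> carrier_mat n n \<Longrightarrow> mtr (A + B) = mtr A + mtr B"
  unfolding mtr_def by (simp add: sum.distrib)

lemma mtr_minus: "A \<in> carrier_mat n n \<Longrightarrow> B \<in> carrier_mat n n \<Longrightarrow> mtr (A - B) = mtr A - mtr B"
  unfolding mtr_def by (simp add: sum_subtractf)

lemma mtr_mult: "A \<in> carrier_mat n m \<Longrightarrow> B \<in> carrier_mat m n \<Longrightarrow>
  mtr (A * B) = (\<Sum>i<n. \<Sum>j<m. A $$ (i,j) * B $$ (j,i))"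
proof -
  assume A: "A \<in> carrier_mat n m" and B: "B \<in> carrier_mat m n"
  have "mtr (A * B) = (\<Sum>i<n. (A * B) $$ (i,i))" unfolding mtr_def using A by simp
  also have "\<dots> = (\<Sum>i<n. \<Sum>j<m. A $$ (i,j) * B $$ (j,i))"
    by (rule sum.cong) (simp_all add: idx_mult[OF A B])
  finally show ?thesis .
qed

lemma mtr_comm: assumes "A \<in> carrier_mat n m" "B \<in> carrier_mat m n" shows "mtr (A * B) = mtr (B * A)"
proof -
  have "mtr (A * B) = (\<Sum>i<n. \<Sum>j<m. A $$ (i,j) * B $$ (j,i))" by (rule mtr_mult[OF assms])
  also have "\<dots> = (\<Sum>j<m. \<Sum>i<n. B $$ (j,i) * A $$ (i,j))" by (subst sum.swap) (simp add: mult.commute)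
  also have "\<dots> = mtr (B * A)" by (rule mtr_mult[OF assms(2,1), symmetric])
  finally show ?thesis .
qed

lemma mtr_msum: assumes "\<And>h. h \<in> S \<Longrightarrow> F h \<in> carrier_mat n n"
  shows "mtr (msum n n S F) = (\<Sum>h\<in>S. mtr (F h))"
proof -
  have "mtr (msum n n S F) = (\<Sum>i<n. \<Sum>h\<in>S. F h $$ (i,i))" unfolding mtr_def by simp
  also have "\<dots> = (\<Sum>h\<in>S. \<Sum>i<n. F h $$ (i,i))" by (rule sum.swap)
  also have "\<dots> = (\<Sum>h\<in>S. mtr (F h))" unfolding mtr_def by (rule sum.cong) (use assms in auto)
  finally show ?thesis .
qed

lemma aux_pair: fixes St :: "'k::field mat"
  assumes St: "St \<in> carrier_mat n1 m1" and Ss: "Ss \<in> carrier_mat n2 m2" and MT: "MT \<in> carrier_mat m1 m2"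
    and NT: "NT \<in> carrier_mat n1 n2" and MF: "MF \<in> carrier_mat m2 m1" and NF: "NF \<in> carrier_mat n2 n1"
    and PF: "PF \<in> carrier_mat m2 n1" and PT: "PT \<in> carrier_mat m1 n2"
  shows "mtr ((St * MT - NT * Ss) * PF) - mtr ((Ss * MF - NF * St) * PT)
       = mtr (St * (MT * PF + PT * NF)) - mtr (Ss * (MF * PT + PF * NT))"
proof -
  have 1: "mtr ((St * MT - NT * Ss) * PF) = mtr (St * (MT * PF)) - mtr (Ss * (PF * NT))"
  proof -
    have "(St * MT - NT * Ss) * PF = St * (MT * PF) - NT * (Ss * PF)"
      by (simp add: minus_mult_distrib_mat[OF mult_carrier_mat[OF St MT] mult_carrier_mat[OF NT Ss] PF]
          assoc_mult_mat[OF St MT PF] assoc_mult_mat[OF NT Ss PF])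
    then have "mtr ((St * MT - NT * Ss) * PF) = mtr (St * (MT * PF)) - mtr (NT * (Ss * PF))"
      using mtr_minus[OF mult_carrier_mat[OF St mult_carrier_mat[OF MT PF]] mult_carrier_mat[OF NT mult_carrier_mat[OF Ss PF]]]
      by simp
    also have "mtr (NT * (Ss * PF)) = mtr ((Ss * PF) * NT)" by (rule mtr_comm[OF NT mult_carrier_mat[OF Ss PF]])
    also have "\<dots> = mtr (Ss * (PF * NT))" by (simp add: assoc_mult_mat[OF Ss PF NT])
    finally show ?thesis .
  qed
  have 2: "mtr ((Ss * MF - NF * St) * PT) = mtr (Ss * (MF * PT)) - mtr (St * (PT * NF))"
  proof -
    have "(Ss * MF - NF * St) * PT = Ss * (MF * PT) - NF * (St * PT)"
      by (simp add: minus_mult_distrib_mat[OF mult_carrier_mat[OF Ss MF] mult_carrier_mat[OF NF St] PT]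
          assoc_mult_mat[OF Ss MF PT] assoc_mult_mat[OF NF St PT])
    then have "mtr ((Ss * MF - NF * St) * PT) = mtr (Ss * (MF * PT)) - mtr (NF * (St * PT))"
      using mtr_minus[OF mult_carrier_mat[OF Ss mult_carrier_mat[OF MF PT]] mult_carrier_mat[OF NF mult_carrier_mat[OF St PT]]]
      by simp
    also have "mtr (NF * (St * PT)) = mtr ((St * PT) * NF)" by (rule mtr_comm[OF NF mult_carrier_mat[OF St PT]])
    also have "\<dots> = mtr (St * (PT * NF))" by (simp add: assoc_mult_mat[OF St PT NF])
    finally show ?thesis .
  qed
  have 3: "mtr (St * (MT * PF + PT * NF)) = mtr (St * (MT * PF)) + mtr (St * (PT * NF))"
    by (simp add: mult_add_distrib_mat[OF St mult_carrier_mat[OF MT PF] mult_carrier_mat[OF PT NF]]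
        mtr_add[OF mult_carrier_mat[OF St mult_carrier_mat[OF MT PF]] mult_carrier_mat[OF St mult_carrier_mat[OF PT NF]]])
  have 4: "mtr (Ss * (MF * PT + PF * NT)) = mtr (Ss * (MF * PT)) + mtr (Ss * (PF * NT))"
    by (simp add: mult_add_distrib_mat[OF Ss mult_carrier_mat[OF MF PT] mult_carrier_mat[OF PF NT]]
        mtr_add[OF mult_carrier_mat[OF Ss mult_carrier_mat[OF MF PT]] mult_carrier_mat[OF Ss mult_carrier_mat[OF PF NT]]])
  show ?thesis unfolding 1 2 3 4 by (simp add: algebra_simps)
qed

lemma sum_fiber: "(\<Sum>i\<in>(UNIV::'i::finite set). \<Sum>h\<in>{h. t h = i}. F h i) = (\<Sum>h\<in>(UNIV::'a::finite set). F h (t h))"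
proof -
  have "(\<Sum>i\<in>(UNIV::'i set). \<Sum>h\<in>{h. t h = i}. F h i) = (\<Sum>i\<in>(UNIV::'i set). \<Sum>h\<in>(UNIV::'a set). if t h = i then F h i else 0)"
    by (rule sum.cong) (simp_all add: sum.If_cases)
  also have "\<dots> = (\<Sum>h\<in>(UNIV::'a set). \<Sum>i\<in>(UNIV::'i set). if t h = i then F h i else 0)" by (rule sum.swap)
  also have "\<dots> = (\<Sum>h\<in>(UNIV::'a set). F h (t h))" by simp
  finally show ?thesis .
qed


definition pair :: "('a \<times> bool \<Rightarrow> 'k::field mat) \<Rightarrow> ('a \<times> bool \<Rightarrow> 'k mat) \<Rightarrow> 'k" where
  "pair \<phi> \<psi> = (\<Sum>h\<in>UNIV. mtr (\<phi> (h,True) * \<psi> (h,False)) - mtr (\<phi> (h,False) * \<psi> (h,True)))"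

context Q begin

lemma pair_d0: assumes rM: "rep M" and rN: "rep N" and s: "C0 M N \<sigma>" and psi: "C1 N M \<psi>"
  shows "pair (d0 M N \<sigma>) \<psi> = (\<Sum>i\<in>UNIV. mtr (\<sigma> i * d1 N M \<psi> i))"
proof -
  note sc = C0D[OF s]
  define A where "A h = mp M (h,True) * \<psi> (h,False) + \<psi> (h,True) * mp N (h,False)" for h
  define B where "B h = mp M (h,False) * \<psi> (h,True) + \<psi> (h,False) * mp N (h,True)" for h
  have Ac: "A h \<in> carrier_mat (dimv M (tgt h)) (dimv N (tgt h))" for h
    unfolding A_def by (rule termA_carrier[OF rN rM psi])
  have Bc: "B h \<in> carrier_mat (dimv M (src h)) (dimv N (src h))" for h
    unfolding B_def by (rule termB_carrier[OF rN rM psi])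
  have "mtr (\<sigma> i * d1 N M \<psi> i) = (\<Sum>h\<in>{h. tgt h = i}. mtr (\<sigma> (tgt h) * A h)) - (\<Sum>h\<in>{h. src h = i}. mtr (\<sigma> (src h) * B h))" for i
  proof -
    have cA: "\<And>h. h \<in> {h. tgt h = i} \<Longrightarrow> A h \<in> carrier_mat (dimv M i) (dimv N i)" using Ac by auto
    have cB: "\<And>h. h \<in> {h. src h = i} \<Longrightarrow> B h \<in> carrier_mat (dimv M i) (dimv N i)" using Bc by auto
    have d1e: "d1 N M \<psi> i = msum (dimv M i) (dimv N i) {h. tgt h = i} A - msum (dimv M i) (dimv N i) {h. src h = i} B"
      unfolding d1_def A_def B_def ..
    have "\<sigma> i * d1 N M \<psi> i = msum (dimv N i) (dimv N i) {h. tgt h = i} (\<lambda>h. \<sigma> i * A h) - msum (dimv N i) (dimv N i) {h. src h = i} (\<lambda>h. \<sigma> i * B h)"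
      unfolding d1e mult_minus_distrib_mat[OF sc msum_carrier msum_carrier]
      apply (subst msum_mult_left[OF sc], erule cA)
      apply (subst msum_mult_left[OF sc], erule cB)
      ..
    then have "mtr (\<sigma> i * d1 N M \<psi> i) = (\<Sum>h\<in>{h. tgt h = i}. mtr (\<sigma> i * A h)) - (\<Sum>h\<in>{h. src h = i}. mtr (\<sigma> i * B h))"
      apply (simp only: mtr_minus[OF msum_carrier msum_carrier])
      apply (subst mtr_msum, erule mult_carrier_mat[OF sc cA])
      apply (subst mtr_msum, erule mult_carrier_mat[OF sc cB])
      ..
    also have "\<dots> = (\<Sum>h\<in>{h. tgt h = i}. mtr (\<sigma> (tgt h) * A h)) - (\<Sum>h\<in>{h. src h = i}. mtr (\<sigma> (src h) * B h))"
      by (intro arg_cong2[where f = minus] sum.cong) auto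
    finally show ?thesis .
  qed
  then have "(\<Sum>i\<in>UNIV. mtr (\<sigma> i * d1 N M \<psi> i)) =
      (\<Sum>i\<in>UNIV. \<Sum>h\<in>{h. tgt h = i}. mtr (\<sigma> (tgt h) * A h)) - (\<Sum>i\<in>UNIV. \<Sum>h\<in>{h. src h = i}. mtr (\<sigma> (src h) * B h))"
    by (simp add: sum_subtractf)
  also have "\<dots> = (\<Sum>h\<in>UNIV. mtr (\<sigma> (tgt h) * A h)) - (\<Sum>h\<in>UNIV. mtr (\<sigma> (src h) * B h))"
    using sum_fiber[of "\<lambda>h i. mtr (\<sigma> (tgt h) * A h)" tgt] sum_fiber[of "\<lambda>h i. mtr (\<sigma> (src h) * B h)" src] by simp
  also have "\<dots> = (\<Sum>h\<in>UNIV. mtr (\<sigma> (tgt h) * A h) - mtr (\<sigma> (src h) * B h))"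
    by (simp add: sum_subtractf)
  also have "\<dots> = pair (d0 M N \<sigma>) \<psi>"
    unfolding pair_def
  proof (rule sum.cong[OF refl])
    fix h
    show "mtr (\<sigma> (tgt h) * A h) - mtr (\<sigma> (src h) * B h) =
      mtr (d0 M N \<sigma> (h, True) * \<psi> (h, False)) - mtr (d0 M N \<sigma> (h, False) * \<psi> (h, True))"
      unfolding d0_def A_def B_def
      using aux_pair[OF sc[of "tgt h"] sc[of "src h"] repD(1)[OF rM] repD(1)[OF rN] repD(2)[OF rM] repD(2)[OF rN]
          C1D(3)[OF psi] C1D(2)[OF psi]] by simp
  qed
  finally show ?thesis by simp
qed

lemma pair_anti: assumes phi: "C1 M N \<phi>" and chi: "C1 N M \<chi>"
  shows "pair \<phi> \<chi> = - pair \<chi> \<phi>"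
proof -
  have "pair \<phi> \<chi> = (\<Sum>h\<in>UNIV. - (mtr (\<chi> (h,True) * \<phi> (h,False)) - mtr (\<chi> (h,False) * \<phi> (h,True))))"
    unfolding pair_def
  proof (rule sum.cong[OF refl])
    fix h
    show "mtr (\<phi> (h, True) * \<chi> (h, False)) - mtr (\<phi> (h, False) * \<chi> (h, True)) =
       - (mtr (\<chi> (h, True) * \<phi> (h, False)) - mtr (\<chi> (h, False) * \<phi> (h, True)))"
      using mtr_comm[OF C1D(2)[OF phi] C1D(3)[OF chi]] mtr_comm[OF C1D(3)[OF phi] C1D(2)[OF chi]] by simp
  qed
  also have "\<dots> = - pair \<chi> \<phi>" unfolding pair_def by (rule sum_negf)
  finally show ?thesis .
qed

lemma nondeg: fixes X :: "'i \<Rightarrow> 'k::field mat"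
  assumes Xc: "\<And>i. X i \<in> carrier_mat (dimv M i) (dimv N i)"
    and orth: "\<And>\<sigma>. C0 M N \<sigma> \<Longrightarrow> (\<Sum>i\<in>UNIV. mtr (\<sigma> i * X i)) = 0"
  shows "X i0 = 0\<^sub>m (dimv M i0) (dimv N i0)"
proof (rule eq_matI)
  fix r c assume "r < dim_row (0\<^sub>m (dimv M i0) (dimv N i0) :: 'k mat)" "c < dim_col (0\<^sub>m (dimv M i0) (dimv N i0) :: 'k mat)"
  then have r: "r < dimv M i0" and c: "c < dimv N i0" by auto
  define E :: "'k mat" where "E = mat (dimv N i0) (dimv M i0) (\<lambda>(a,b). if a = c \<and> b = r then 1 else 0)"
  define \<sigma> where "\<sigma> j = (if j = i0 then E else 0\<^sub>m (dimv N j) (dimv M j))" for j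
  have sc: "C0 M N \<sigma>" unfolding C0_def \<sigma>_def E_def by auto
  have "(\<Sum>i\<in>UNIV. mtr (\<sigma> i * X i)) = (\<Sum>i\<in>{i0}. mtr (\<sigma> i * X i))"
  proof (rule sum.mono_neutral_right)
    show "\<forall>i\<in>UNIV - {i0}. mtr (\<sigma> i * X i) = 0"
    proof
      fix i assume "i \<in> UNIV - {i0}"
      then have "\<sigma> i * X i = 0\<^sub>m (dimv N i) (dimv N i)" unfolding \<sigma>_def using left_mult_zero_mat[OF Xc[of i]] by simp
      then show "mtr (\<sigma> i * X i) = 0" unfolding mtr_def by simp
    qed
  qed auto
  also have "\<dots> = mtr (\<sigma> i0 * X i0)" by simp
  also have "\<dots> = (\<Sum>a<dimv N i0. \<Sum>b<dimv M i0. E $$ (a,b) * X i0 $$ (b,a))"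
    unfolding \<sigma>_def by (simp add: mtr_mult[OF _ Xc] E_def)
  also have "\<dots> = (\<Sum>a<dimv N i0. if a = c then X i0 $$ (r, a) else 0)"
  proof (rule sum.cong[OF refl])
    fix a assume a: "a \<in> {..<dimv N i0}"
    have "(\<Sum>b<dimv M i0. E $$ (a,b) * X i0 $$ (b,a)) = (\<Sum>b<dimv M i0. if b = r then (if a = c then X i0 $$ (b,a) else 0) else 0)"
      using a by (intro sum.cong) (auto simp: E_def)
    also have "\<dots> = (if a = c then X i0 $$ (r, a) else 0)" using r by (simp only: sum_delta0) simp
    finally show "(\<Sum>b<dimv M i0. E $$ (a,b) * X i0 $$ (b,a)) = (if a = c then X i0 $$ (r, a) else 0)" .
  qed
  also have "\<dots> = X i0 $$ (r,c)" using c by (simp only: sum_delta0) simp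
  finally show "X i0 $$ (r,c) = 0\<^sub>m (dimv M i0) (dimv N i0) $$ (r,c)" using orth[OF sc] r c by simp
qed (use Xc in auto)

end

lemma vs_fun: "vector_space (\<lambda>(c::'k::field) (f::'x \<Rightarrow> 'k) x. c * f x)"
  by unfold_locales (auto simp: fun_eq_iff algebra_simps)

lemma separation:
  fixes W :: "('x \<Rightarrow> 'k::field) set" and v
  assumes W0: "0 \<in> W" and Wadd: "\<And>a b. a \<in> W \<Longrightarrow> b \<in> W \<Longrightarrow> a + b \<in> W"
    and Wsc: "\<And>c a. a \<in> W \<Longrightarrow> (\<lambda>x. c * a x) \<in> W"
    and vW: "v \<notin> W"
  shows "\<exists>l. Vector_Spaces.linear (\<lambda>(c::'k) (f::'x \<Rightarrow> 'k) x. c * f x) (*) l \<and> (\<forall>w\<in>W. l w = 0) \<and> l v = 1"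
proof -
  interpret V: vector_space "\<lambda>(c::'k) (f::'x \<Rightarrow> 'k) x. c * f x" by (rule vs_fun)
  interpret K: vector_space "(*) :: 'k \<Rightarrow> 'k \<Rightarrow> 'k" by unfold_locales (auto simp: algebra_simps)
  interpret P: vector_space_pair "\<lambda>(c::'k) (f::'x \<Rightarrow> 'k) x. c * f x" "(*) :: 'k \<Rightarrow> 'k \<Rightarrow> 'k" ..
  have sub: "V.subspace W" unfolding V.subspace_def using W0 Wadd Wsc by auto
  obtain B where B: "B \<subseteq> W" "V.independent B" "W \<subseteq> V.span B"
    using V.maximal_independent_subset by blast
  have spB: "V.span B = W" using B sub by (metis V.span_eq_iff V.span_mono subset_antisym)
  have vB: "v \<notin> V.span B" using spB vW by simp
  have ind: "V.independent (insert v B)" using V.independent_insertI[OF vB B(2)] .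
  obtain l where l: "Vector_Spaces.linear (\<lambda>(c::'k) (f::'x \<Rightarrow> 'k) x. c * f x) (*) l"
     "\<forall>x\<in>insert v B. l x = (\<lambda>y. if y = v then 1 else 0) x"
    using P.linear_independent_extend[OF ind, of "\<lambda>y. if y = v then 1 else 0"] by blast
  have vnB: "v \<notin> B" using vB V.span_base by blast
  have "\<forall>w\<in>V.span B. l w = 0"
  proof
    fix w assume w: "w \<in> V.span B"
    have "\<And>x. x \<in> B \<Longrightarrow> l x = 0" using l(2) vnB by auto
    then show "l w = 0" using P.linear_eq_0_on_span[OF l(1)] w by blast
  qed
  then show ?thesis using l spB by auto
qed

lemma smult_minus_mat: fixes A :: "'k::field mat"
  shows "A \<in> carrier_mat n m \<Longrightarrow> B \<in> carrier_mat n m \<Longrightarrow> k \<cdot>\<^sub>m (A - B) = k \<cdot>\<^sub>m A - k \<cdot>\<^sub>m B"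
  by (intro eq_matI) (auto simp: algebra_simps)

lemma sum_fun_apply: "finite S \<Longrightarrow> (sum f S) y = (\<Sum>x\<in>S. f x y)"
  by (induct rule: finite_induct) auto

lemma linear_sum_scale:
  assumes l: "Vector_Spaces.linear (\<lambda>(c::'k::field) (f::'x \<Rightarrow> 'k) x. c * f x) (*) l" and S: "finite S"
  shows "l (\<Sum>x\<in>S. (\<lambda>y. a x * g x y)) = (\<Sum>x\<in>S. a x * l (g x))"
proof -
  have mh: "module_hom (\<lambda>(c::'k) (f::'x \<Rightarrow> 'k) x. c * f x) (*) l" using l module_hom_iff_linear by blast
  have "l (\<Sum>x\<in>S. (\<lambda>y. a x * g x y)) = (\<Sum>x\<in>S. l (\<lambda>y. a x * g x y))" by (rule module_hom.sum[OF mh])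
  also have "\<dots> = (\<Sum>x\<in>S. a x * l (g x))"
    using module_hom.scale[OF mh] by (intro sum.cong) auto
  finally show ?thesis .
qed

lemma sum_UNIV_bool_pair: "(\<Sum>e\<in>(UNIV :: ('a::finite \<times> bool) set). G e) = (\<Sum>h\<in>UNIV. G (h,True) + G (h,False))"
proof -
  have "(\<Sum>e\<in>(UNIV :: ('a \<times> bool) set). G e) = (\<Sum>e\<in>(UNIV :: 'a set) \<times> (UNIV :: bool set). G e)"
    by (simp add: UNIV_Times_UNIV)
  also have "\<dots> = (\<Sum>h\<in>UNIV. \<Sum>b\<in>UNIV. G (h,b))" by (rule sum.cartesian_product')
  also have "\<dots> = (\<Sum>h\<in>UNIV. G (h,True) + G (h,False))" by (simp add: UNIV_bool add.commute)
  finally show ?thesis .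
qed

context Q begin

definition vz :: "('i,'a,'k::field) pirep \<Rightarrow> ('i,'a,'k) pirep \<Rightarrow> ('a \<times> bool \<Rightarrow> 'k mat) \<Rightarrow> ('a \<times> bool) \<times> nat \<times> nat \<Rightarrow> 'k" where
  "vz N M \<chi> = (\<lambda>(e,r,c). if r < dimv M (dt e) \<and> c < dimv N (ds e) then \<chi> e $$ (r,c) else 0)"

definition Ix :: "('i,'a,'k::field) pirep \<Rightarrow> ('i,'a,'k) pirep \<Rightarrow> (('a \<times> bool) \<times> nat \<times> nat) set" where
  "Ix N M = (SIGMA e:UNIV. {..<dimv M (dt e)} \<times> {..<dimv N (ds e)})"

lemma Ix_finite: "finite (Ix N M)" unfolding Ix_def by auto

lemma vz_inj: assumes "C1 N M \<chi>" "C1 N M \<chi>'" "vz N M \<chi> = vz N M \<chi>'" shows "\<chi> = \<chi>'"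
proof (rule ext, rule eq_matI)
  fix e r c assume "r < dim_row (\<chi>' e)" "c < dim_col (\<chi>' e)"
  then have rc: "r < dimv M (dt e)" "c < dimv N (ds e)" using C1D(1)[OF assms(2), of e] by auto
  show "\<chi> e $$ (r,c) = \<chi>' e $$ (r,c)" using fun_cong[OF assms(3), of "(e,r,c)"] rc unfolding vz_def by simp
qed (simp_all add: carrier_matD[OF C1D(1)[OF assms(1)]] carrier_matD[OF C1D(1)[OF assms(2)]])

lemma vz_sum: "vz N M \<chi> = (\<Sum>x\<in>Ix N M. (\<lambda>y. \<chi> (fst x) $$ (fst (snd x), snd (snd x)) * (if x = y then 1 else 0)))"
proof (rule ext)
  fix y :: "('a \<times> bool) \<times> nat \<times> nat"
  have "(\<Sum>x\<in>Ix N M. (\<lambda>y. \<chi> (fst x) $$ (fst (snd x), snd (snd x)) * (if x = y then 1 else 0))) y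
      = (\<Sum>x\<in>Ix N M. \<chi> (fst x) $$ (fst (snd x), snd (snd x)) * (if x = y then 1 else 0))"
    by (rule sum_fun_apply[OF Ix_finite])
  also have "\<dots> = (\<Sum>x\<in>Ix N M. if y = x then \<chi> (fst x) $$ (fst (snd x), snd (snd x)) else 0)"
    by (rule sum.cong) auto
  also have "\<dots> = (if y \<in> Ix N M then \<chi> (fst y) $$ (fst (snd y), snd (snd y)) else 0)"
    by (rule sum.delta'[OF Ix_finite])
  also have "\<dots> = vz N M \<chi> y" unfolding vz_def Ix_def by (cases y) auto
  finally show "vz N M \<chi> y = (\<Sum>x\<in>Ix N M. (\<lambda>y. \<chi> (fst x) $$ (fst (snd x), snd (snd x)) * (if x = y then 1 else 0))) y" by simp
qed

lemma sum_Ix: "(\<Sum>x\<in>Ix N M. F x) = (\<Sum>e\<in>UNIV. \<Sum>r<dimv M (dt e). \<Sum>c<dimv N (ds e). F (e,r,c))"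
proof -
  have "(\<Sum>x\<in>Ix N M. F x) = (\<Sum>e\<in>UNIV. \<Sum>rc\<in>{..<dimv M (dt e)} \<times> {..<dimv N (ds e)}. F (e,rc))"
    unfolding Ix_def using sum.Sigma[of "UNIV" "\<lambda>e. {..<dimv M (dt e)} \<times> {..<dimv N (ds e)}" "\<lambda>e rc. F (e, rc)"] by simp
  also have "\<dots> = (\<Sum>e\<in>UNIV. \<Sum>r<dimv M (dt e). \<Sum>c<dimv N (ds e). F (e,r,c))"
    by (rule sum.cong[OF refl]) (rule sum.cartesian_product')
  finally show ?thesis .
qed


lemma pair_phi:
  fixes l :: "(('a \<times> bool) \<times> nat \<times> nat \<Rightarrow> 'k::field) \<Rightarrow> 'k" and M N :: "('i,'a,'k) pirep"
  defines "L \<equiv> (\<lambda>x. l (\<lambda>y. if x = y then 1 else 0))"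
  defines "\<phi> \<equiv> (\<lambda>e. mat (dimv N (dt e)) (dimv M (ds e)) (\<lambda>(a,b). (if snd e then 1 else -1) * L ((fst e, \<not> snd e), b, a)))"
  assumes chi: "C1 N M \<chi>"
  shows "pair \<phi> \<chi> = (\<Sum>x\<in>Ix N M. \<chi> (fst x) $$ (fst (snd x), snd (snd x)) * L x)"
proof -
  define G where "G e = (\<Sum>r<dimv M (dt e). \<Sum>c<dimv N (ds e). \<chi> e $$ (r,c) * L (e,r,c))" for e
  have phiT: "\<phi> (h,True) \<in> carrier_mat (dimv N (tgt h)) (dimv M (src h))" for h unfolding \<phi>_def by simp
  have phiF: "\<phi> (h,False) \<in> carrier_mat (dimv N (src h)) (dimv M (tgt h))" for h unfolding \<phi>_def by simp
  have 1: "mtr (\<phi> (h,True) * \<chi> (h,False)) = G (h,False)" for h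
  proof -
    have "mtr (\<phi> (h,True) * \<chi> (h,False)) = (\<Sum>a<dimv N (tgt h). \<Sum>b<dimv M (src h). \<phi> (h,True) $$ (a,b) * \<chi> (h,False) $$ (b,a))"
      by (rule mtr_mult[OF phiT C1D(3)[OF chi]])
    also have "\<dots> = (\<Sum>a<dimv N (tgt h). \<Sum>b<dimv M (src h). \<chi> (h,False) $$ (b,a) * L ((h,False),b,a))"
      unfolding \<phi>_def by (intro sum.cong refl) auto
    also have "\<dots> = G (h,False)" unfolding G_def by (simp add: sum.swap[of _ "{..<dimv N (tgt h)}"])
    finally show ?thesis .
  qed
  have 2: "mtr (\<phi> (h,False) * \<chi> (h,True)) = - G (h,True)" for h
  proof -
    have "mtr (\<phi> (h,False) * \<chi> (h,True)) = (\<Sum>a<dimv N (src h). \<Sum>b<dimv M (tgt h). \<phi> (h,False) $$ (a,b) * \<chi> (h,True) $$ (b,a))"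
      by (rule mtr_mult[OF phiF C1D(2)[OF chi]])
    also have "\<dots> = (\<Sum>a<dimv N (src h). \<Sum>b<dimv M (tgt h). - (\<chi> (h,True) $$ (b,a) * L ((h,True),b,a)))"
      unfolding \<phi>_def by (intro sum.cong refl) auto
    also have "\<dots> = - G (h,True)" unfolding G_def by (simp add: sum_negf sum.swap[of _ "{..<dimv N (src h)}"])
    finally show ?thesis .
  qed
  have "pair \<phi> \<chi> = (\<Sum>h\<in>UNIV. G (h,True) + G (h,False))"
    unfolding pair_def 1 2 by (simp add: add.commute)
  also have "\<dots> = (\<Sum>e\<in>UNIV. G e)" by (rule sum_UNIV_bool_pair[symmetric])
  also have "\<dots> = (\<Sum>x\<in>Ix N M. \<chi> (fst x) $$ (fst (snd x), snd (snd x)) * L x)"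
    unfolding sum_Ix G_def by simp
  finally show ?thesis .
qed

lemma duality: fixes M N :: "('i,'a,'k::field) pirep" assumes M: "pi_module src tgt M" and N: "pi_module src tgt N" and H: "H1z M N"
  shows "H1z N M"
  unfolding H1z_def
proof (intro allI impI)
  fix \<psi> assume Zpsi: "Zc N M \<psi>"
  have rM: "rep M" and rN: "rep N" using M N unfolding pi_module_iff by auto
  have psic: "C1 N M \<psi>" using Zpsi unfolding Zc_def by simp
  show "\<exists>\<tau>. C0 N M \<tau> \<and> d0 N M \<tau> = \<psi>"
  proof (rule ccontr)
    assume nB: "\<not> (\<exists>\<tau>. C0 N M \<tau> \<and> d0 N M \<tau> = \<psi>)"
    define W where "W = {vz N M (d0 N M \<tau>) | \<tau>. C0 N M \<tau>}"
    have W0: "0 \<in> W"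
    proof -
      have c0: "C0 N M (\<lambda>i. 0\<^sub>m (dimv M i) (dimv N i))" unfolding C0_def by simp
      have z: "d0 N M (\<lambda>i. 0\<^sub>m (dimv M i) (dimv N i)) e = 0\<^sub>m (dimv M (dt e)) (dimv N (ds e))" for e
        unfolding d0_def using left_mult_zero_mat[OF repD(3)[OF rN, of e]] right_mult_zero_mat[OF repD(3)[OF rM, of e]]
        by simp
      have "vz N M (d0 N M (\<lambda>i. 0\<^sub>m (dimv M i) (dimv N i))) = 0"
        unfolding vz_def z by (auto simp: fun_eq_iff)
      then show ?thesis unfolding W_def using c0 by (metis (mono_tags, lifting) mem_Collect_eq)
    qed
    have Wadd: "a + b \<in> W" if ab: "a \<in> W" "b \<in> W" for a b
    proof -
      obtain \<tau>1 where t1: "C0 N M \<tau>1" "a = vz N M (d0 N M \<tau>1)" using ab(1) unfolding W_def by blast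
      obtain \<tau>2 where t2: "C0 N M \<tau>2" "b = vz N M (d0 N M \<tau>2)" using ab(2) unfolding W_def by blast
      have "a + b = vz N M (d0 N M (\<lambda>i. \<tau>1 i + \<tau>2 i))"
        unfolding t1(2) t2(2) vz_def d0_add[OF rN rM t1(1) t2(1)]
        by (auto simp: fun_eq_iff carrier_matD[OF C1D(1)[OF d0_C1[OF rN rM t2(1)]]])
      then show ?thesis unfolding W_def using C0_add[OF t1(1) t2(1)] by blast
    qed
    have Wsc: "(\<lambda>x. c * a x) \<in> W" if aW: "a \<in> W" for c a
    proof -
      obtain \<tau> where t: "C0 N M \<tau>" "a = vz N M (d0 N M \<tau>)" using aW unfolding W_def by blast
      have sc: "C0 N M (\<lambda>i. c \<cdot>\<^sub>m \<tau> i)" using t(1) unfolding C0_def by simp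
      have "d0 N M (\<lambda>i. c \<cdot>\<^sub>m \<tau> i) e = c \<cdot>\<^sub>m d0 N M \<tau> e" for e
      proof -
        note tc = C0D[OF t(1)] and Me = repD(3)[OF rM, of e] and Ne = repD(3)[OF rN, of e]
        show ?thesis unfolding d0_def mult_smult_assoc_mat[OF tc Ne] mult_smult_distrib[OF Me tc]
          by (rule smult_minus_mat[symmetric, OF mult_carrier_mat[OF tc Ne] mult_carrier_mat[OF Me tc]])
      qed
      then have "(\<lambda>x. c * a x) = vz N M (d0 N M (\<lambda>i. c \<cdot>\<^sub>m \<tau> i))"
        unfolding t(2) vz_def by (auto simp: fun_eq_iff carrier_matD[OF C1D(1)[OF d0_C1[OF rN rM t(1)]]])
      then show ?thesis unfolding W_def using sc by blast
    qed
    have vW: "vz N M \<psi> \<notin> W"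
    proof
      assume "vz N M \<psi> \<in> W"
      then obtain \<tau> where t: "C0 N M \<tau>" "vz N M \<psi> = vz N M (d0 N M \<tau>)" unfolding W_def by blast
      have "\<psi> = d0 N M \<tau>" by (rule vz_inj[OF psic d0_C1[OF rN rM t(1)] t(2)])
      then show False using nB t(1) by blast
    qed
    obtain l where l: "Vector_Spaces.linear (\<lambda>(c::'k) (f::('a \<times> bool) \<times> nat \<times> nat \<Rightarrow> 'k) x. c * f x) (*) l"
      "\<forall>w\<in>W. l w = 0" "l (vz N M \<psi>) = 1"
      using separation[OF W0 Wadd Wsc vW] by blast
    define L where "L \<equiv> (\<lambda>x. l (\<lambda>y. if x = y then 1 else 0))"
    define \<phi> where "\<phi> \<equiv> (\<lambda>e. mat (dimv N (dt e)) (dimv M (ds e)) (\<lambda>(a,b). (if snd e then 1 else -1) * L ((fst e, \<not> snd e), b, a)))"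
    have phic: "C1 M N \<phi>" unfolding C1_def \<phi>_def by simp
    have key: "pair \<phi> \<chi> = l (vz N M \<chi>)" if chi: "C1 N M \<chi>" for \<chi>
    proof -
      have "pair \<phi> \<chi> = (\<Sum>x\<in>Ix N M. \<chi> (fst x) $$ (fst (snd x), snd (snd x)) * L x)"
        unfolding \<phi>_def L_def by (rule pair_phi[OF chi])
      also have "\<dots> = l (vz N M \<chi>)"
        unfolding vz_sum L_def by (rule linear_sum_scale[OF l(1) Ix_finite, symmetric])
      finally show ?thesis .
    qed
    have "d1 M N \<phi> i = 0\<^sub>m (dimv N i) (dimv M i)" for i
    proof (rule nondeg[of "d1 M N \<phi>" N M])
      show "\<And>i. d1 M N \<phi> i \<in> carrier_mat (dimv N i) (dimv M i)" by (rule d1_carrier)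
      fix \<tau> assume t: "C0 N M \<tau>"
      have "(\<Sum>i\<in>UNIV. mtr (\<tau> i * d1 M N \<phi> i)) = pair (d0 N M \<tau>) \<phi>"
        by (rule pair_d0[OF rN rM t phic, symmetric])
      also have "\<dots> = - pair \<phi> (d0 N M \<tau>)" by (rule pair_anti[OF d0_C1[OF rN rM t] phic])
      also have "\<dots> = - l (vz N M (d0 N M \<tau>))" using key[OF d0_C1[OF rN rM t]] by simp
      also have "\<dots> = 0" using l(2) t unfolding W_def by auto
      finally show "(\<Sum>i\<in>UNIV. mtr (\<tau> i * d1 M N \<phi> i)) = 0" .
    qed
    then have "Zc M N \<phi>" unfolding Zc_def using phic by simp
    then obtain \<sigma> where s: "C0 M N \<sigma>" "d0 M N \<sigma> = \<phi>" using H unfolding H1z_def by blast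
    have "pair \<phi> \<psi> = (\<Sum>i\<in>UNIV. mtr (\<sigma> i * d1 N M \<psi> i))"
      unfolding s(2)[symmetric] by (rule pair_d0[OF rM rN s(1) psic])
    also have "\<dots> = 0"
      using Zpsi right_mult_zero_mat[OF C0D[OF s(1)]] unfolding Zc_def by (simp add: mtr_def)
    finally have "pair \<phi> \<psi> = 0" .
    moreover have "pair \<phi> \<psi> = 1" using key[OF psic] l(3) by simp
    ultimately show False by simp
  qed
qed

end

theorem lemma8p1:
  fixes src tgt :: "'a::finite \<Rightarrow> 'i::finite"
    and x x1 x2 :: "('i, 'a, 'k::field) pirep"
    and f g :: "'i \<Rightarrow> 'k mat"
  assumes alg_closed: "\<forall>p :: 'k poly. 0 < degree p \<longrightarrow> (\<exists>z. poly p z = 0)"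
    and no_loops: "\<forall>h. src h \<noteq> tgt h"
    and ses: "pi_ses src tgt x2 x x1 f g"
    and e22: "ext1_zero src tgt x2 x2"
    and ex1: "ext1_zero src tgt x x1"
  shows "ext1_zero src tgt x1 x1 \<and> ext1_zero src tgt x x"
proof -
  interpret Q src tgt .
  note p = ses_parts[OF ses]
  have h22: "H1z x2 x2" by (rule ext1_H1z[OF p(1) p(1) e22])
  have hx1: "H1z x x1" by (rule ext1_H1z[OF p(2) p(3) ex1])
  have h1x: "H1z x1 x" by (rule duality[OF p(2) p(3) hx1])
  have "H1z x1 x1" by (rule claimB[OF ses h22 hx1 h1x])
  moreover have "H1z x x" by (rule claimA[OF ses h22 hx1 h1x])
  ultimately show ?thesis using H1z_ext1 p(2) p(3) by blast
qed

end
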